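(* Let $X_i$, $i\ge1$, be i.i.d. standard normal random variables (so $\sigma^2=1$), and let $a_k=2^{k-1}$, $k\ge1$. Let $\xi_j$, $j\ge0$, be i.i.d. random variables each distributed as $\int_0^1\mathbb B(t)^2\,dt$, where $\mathbb B$ is a standard Brownian motion. Then $v_{2^m}\sim 2^{2m}/6$ and, as $m\to\infty$, $$\frac{V_{2^m}}{v_{2^m}}\Rightarrow\frac32\sum_{j=0}^\infty\frac{\xi_j}{4^j}.$$ In particular $V_n/v_n$ is not a consistent estimator of $\sigma^2$ for this sequence $(a_k)$.
   Context: $\Rightarrow$ denotes convergence in distribution and $a_n\sim b_n$ means $a_n/b_n\to1$. Given a strictly increasing integer sequence $(a_k)_{k\ge1}$ with $a_1=1$, define for $i\ge1$: $t_i=\max\{a_k:a_k\le i\}$, $W_i=X_{t_i}+X_{t_i+1}+\cdots+X_i$, $l_i=i-t_i+1$, $V_n=\sum_{i=1}^nW_i^2$, $v_n=\sum_{i=1}^nl_i$. *)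

theory Defs
  imports "HOL-Probability.Probability"
begin

definition tseq :: "(nat \<Rightarrow> nat) \<Rightarrow> nat \<Rightarrow> nat" where
  "tseq a i = Max {a k | k. 1 \<le> k \<and> a k \<le> i}"

definition Wsum :: "(nat \<Rightarrow> nat) \<Rightarrow> (nat \<Rightarrow> 'a \<Rightarrow> real) \<Rightarrow> nat \<Rightarrow> 'a \<Rightarrow> real" where
  "Wsum a X i \<omega> = (\<Sum>j = tseq a i..i. X j \<omega>)"

definition lseq :: "(nat \<Rightarrow> nat) \<Rightarrow> nat \<Rightarrow> nat" where
  "lseq a i = i - tseq a i + 1"

definition Vstat :: "(nat \<Rightarrow> nat) \<Rightarrow> (nat \<Rightarrow> 'a \<Rightarrow> real) \<Rightarrow> nat \<Rightarrow> 'a \<Rightarrow> real" where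
  "Vstat a X n \<omega> = (\<Sum>i = 1..n. (Wsum a X i \<omega>)\<^sup>2)"

definition vnorm :: "(nat \<Rightarrow> nat) \<Rightarrow> nat \<Rightarrow> nat" where
  "vnorm a n = (\<Sum>i = 1..n. lseq a i)"

definition brownian_motion :: "'b measure \<Rightarrow> (real \<Rightarrow> 'b \<Rightarrow> real) \<Rightarrow> bool" where
  "brownian_motion Q B \<longleftrightarrow>
     prob_space Q \<and>
     (\<forall>t\<ge>0. B t \<in> borel_measurable Q) \<and>
     (\<forall>\<omega>\<in>space Q. B 0 \<omega> = 0) \<and>
     (\<forall>\<omega>\<in>space Q. continuous_on {0..} (\<lambda>t. B t \<omega>)) \<and>
     (\<forall>s t. 0 \<le> s \<and> s < t \<longrightarrow>
        distributed Q lborel (\<lambda>\<omega>. B t \<omega> - B s \<omega>) (normal_density 0 (sqrt (t - s)))) \<and>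
     (\<forall>(tt :: nat \<Rightarrow> real) n. 0 \<le> tt 0 \<and> strict_mono tt \<longrightarrow>
        prob_space.indep_vars Q (\<lambda>_. borel) (\<lambda>i \<omega>. B (tt (Suc i)) \<omega> - B (tt i) \<omega>) {..<n})"

end

theory Submission
  imports Defs
begin

lemma tseq_blk:
  assumes a_def: "\<And>k. a k = 2 ^ (k - 1)" and "2^p \<le> i" "i < 2^(Suc p)"
  shows "tseq a i = 2^p"
proof -
  have S: "{a k | k. 1 \<le> k \<and> a k \<le> i} = {(2::nat)^(k-1) | k. 1 \<le> k \<and> (2::nat)^(k-1) \<le> i}"
    unfolding a_def ..
  have fin: "finite {(2::nat)^(k-1) | k. 1 \<le> k \<and> (2::nat)^(k-1) \<le> i}"
    by (rule finite_subset[of _ "{..i}"]) blast+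
  show ?thesis unfolding tseq_def S
  proof (rule Max_eqI[OF fin])
    fix y assume "y \<in> {(2::nat)^(k-1) | k. 1 \<le> k \<and> (2::nat)^(k-1) \<le> i}"
    then obtain k where k: "y = 2^(k-1)" "2^(k-1) \<le> i" by blast
    have "(2::nat)^(k-1) < 2^(Suc p)" using k(2) assms(3) by (rule le_less_trans)
    then have "k - 1 < Suc p" using power_less_imp_less_exp[of 2 "k-1" "Suc p"] by simp
    then have "k - 1 \<le> p" by simp
    then show "y \<le> 2^p" unfolding k(1) by (rule power_increasing) simp
  next
    show "(2::nat)^p \<in> {(2::nat)^(k-1) | k. 1 \<le> k \<and> (2::nat)^(k-1) \<le> i}"
      using assms(2) by (intro CollectI exI[of _ "Suc p"]) simp
  qed
qed
lemma lseq_blk: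
  assumes a_def: "\<And>k. a k = 2 ^ (k - 1)" and "2^p \<le> i" "i < 2^(Suc p)"
  shows "lseq a i = i - 2^p + 1"
  using tseq_blk[OF assms] by (simp add: lseq_def)

lemma vnorm_Suc: "vnorm a (Suc n) = vnorm a n + lseq a (Suc n)"
  by (simp add: vnorm_def)

lemma vnorm_B:
  assumes a_def: "\<And>k. a k = 2 ^ (k - 1)"
  shows "r < 2^p \<Longrightarrow> 2 * vnorm a (2^p + r) = 2 * vnorm a (2^p) + r * (r + 3)"
proof (induction r)
  case 0 then show ?case by simp
next
  case (Suc r)
  have "lseq a (Suc (2^p + r)) = r + 2"
    using lseq_blk[OF a_def, of p "Suc (2^p + r)"] Suc.prems by simp
  then show ?case using Suc by (simp add: vnorm_Suc algebra_simps)
qed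

lemma vnorm_pow:
  assumes a_def: "\<And>k. a k = 2 ^ (k - 1)"
  shows "6 * vnorm a (2^p) = 4^p + 3 * 2^p + 2"
proof (induction p)
  case 0 then show ?case
    using lseq_blk[OF a_def, of 0 1] by (simp add: vnorm_def)
next
  case (Suc p)
  have pos: "(1::nat) \<le> 2^p" by simp
  have B: "2 * vnorm a (2^p + (2^p - 1)) = 2 * vnorm a (2^p) + (2^p - 1) * (2^p - 1 + 3)"
    by (rule vnorm_B[OF a_def]) simp
  have e: "2^(Suc p) = Suc (2^p + (2^p - 1))" using pos by simp
  have l: "lseq a (2^(Suc p)) = 1"
    using lseq_blk[OF a_def, of "Suc p" "2^Suc p"] by simp
  have "6 * vnorm a (2^Suc p) = 6 * vnorm a (2^p + (2^p - 1)) + 6"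
  proof -
    have "vnorm a (2^Suc p) = vnorm a (2^p + (2^p - 1)) + lseq a (2^Suc p)"
      by (metis e vnorm_Suc)
    then show ?thesis using l by simp
  qed
  also have "\<dots> = 6 * vnorm a (2^p) + 3 * ((2^p - 1) * (2^p - 1 + 3)) + 6" using B by linarith
  also have "\<dots> = 4 ^ Suc p + 3 * 2 ^ Suc p + 2"
  proof -
    obtain q where q: "(2::nat)^p = Suc q" using pos by (metis One_nat_def Suc_le_D)
    have h4: "(4::nat)^p = Suc q * Suc q" using power_mult_distrib[of "2::nat" 2 p] q by simp
    have h4': "(4::nat)^Suc p = 4 * (Suc q * Suc q)" using h4 by simp
    have h2': "(2::nat)^Suc p = 2 * Suc q" using q by simp
    have hm: "(2::nat)^p - 1 = q" using q by simp
    have IH: "6 * vnorm a (2^p) = Suc q * Suc q + 3 * Suc q + 2" using Suc.IH h4 q by simp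
    have "6 * vnorm a (2^p) + 3 * (q * (q + 3)) + 6 = 4 * (Suc q * Suc q) + 3 * (2 * Suc q) + 2"
      unfolding IH by (simp add: algebra_simps)
    then show ?thesis unfolding h4' h2' hm .
  qed
  finally show ?case .
qed

lemma vnorm_pow_real:
  assumes a_def: "\<And>k. a k = 2 ^ (k - 1)"
  shows "real (vnorm a (2^p)) = (4^p + 3 * 2^p + 2) / 6"
proof -
  have "real (6 * vnorm a (2^p)) = real (4^p + 3 * 2^p + 2)" using vnorm_pow[OF a_def] by metis
  then show ?thesis by simp
qed

lemma part1:
  assumes a_def: "\<And>k. a k = 2 ^ (k - 1)"
  shows "(\<lambda>m. real (vnorm a (2 ^ m)) / (2 ^ (2 * m) / 6)) \<longlonglongrightarrow> 1"
proof -
  have e: "real (vnorm a (2 ^ m)) / (2 ^ (2 * m) / 6) = 1 + 3 * (1/2)^m + 2 * (1/4)^m" for m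
  proof -
    have "(2::real) ^ (2*m) = 4^m" by (simp add: power_mult)
    moreover have "(4::real)^m = 2^m * 2^m" by (simp add: power_mult_distrib[symmetric])
    ultimately show ?thesis using vnorm_pow_real[OF a_def, of m]
      by (simp add: field_simps power_divide)
  qed
  have "(\<lambda>m. 1 + 3 * (1/2::real)^m + 2 * (1/4)^m) \<longlonglongrightarrow> 1 + 3 * 0 + 2 * 0"
    by (intro tendsto_intros LIMSEQ_power_zero) auto
  then show ?thesis unfolding e by simp
qed

lemma riemann_sum_conv:
  fixes f :: "real \<Rightarrow> real"
  assumes cont: "continuous_on {0..1} f"
  shows "(\<lambda>n. (\<Sum>i<n. f (real (Suc i) / real n)) / real n) \<longlonglongrightarrow> integral {0..1} f"
proof (rule LIMSEQ_I)
  fix e :: real assume e: "0 < e"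
  define F where "F x = integral {0..x} f" for x
  have uc: "uniformly_continuous_on {0..1} f"
    by (rule compact_uniformly_continuous[OF cont]) simp
  obtain d where d: "d > 0" "\<And>x x'. x \<in> {0..1} \<Longrightarrow> x' \<in> {0..1} \<Longrightarrow> dist x' x < d \<Longrightarrow> dist (f x') (f x) < e/2"
    using uc e unfolding uniformly_continuous_on_def by (meson half_gt_zero)
  obtain N :: nat where N: "1 / d < N" using reals_Archimedean2 by blast
  have NP: "N > 0" using N d by (metis divide_pos_pos gr0I less_eq_real_def not_le of_nat_0 zero_less_one)
  show "\<exists>no. \<forall>n\<ge>no. norm ((\<Sum>i<n. f (real (Suc i) / real n)) / real n - integral {0..1} f) < e"
  proof (intro exI allI impI)
    fix n assume n: "N \<le> n"
    then have npos: "n > 0" using NP by simp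
    have small: "1 / real n < d"
    proof -
      have "1 / real n \<le> 1 / real N" using n NP by (simp add: frac_le)
      also have "\<dots> < d" using N d NP by (simp add: field_simps)
      finally show ?thesis .
    qed
    have der: "(F has_real_derivative f x) (at x within {0..1})" if "x \<in> {0..1}" for x
      unfolding F_def by (rule integral_has_real_derivative[OF cont that])
    have piece: "\<bar>F (real (Suc i) / n) - F (real i / n) - f (real (Suc i) / n) / n\<bar> \<le> e/2 / n"
      if i: "i < n" for i
    proof -
      let ?a = "real i / n" and ?b = "real (Suc i) / n"
      have ab: "?a \<le> ?b" using npos by (simp add: divide_right_mono)
      have a0: "0 \<le> ?a" by simp
      have b1: "?b \<le> 1" using i npos by (simp add: field_simps)
      have sub: "{?a..?b} \<subseteq> {0..1}" 
      proof
        fix x assume "x \<in> {?a..?b}"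
        then have "?a \<le> x" "x \<le> ?b" by auto
        then show "x \<in> {0..1}" using a0 b1 by (simp only: atLeastAtMost_iff) linarith
      qed
      have "\<exists>x\<in>{?a..?b}. F ?b - F ?a = (\<lambda>h. h * f x) (?b - ?a)"
      proof (rule mvt_very_simple[OF ab])
        fix x assume "?a \<le> x" "x \<le> ?b"
        then have "x \<in> {0..1}" using sub by (meson atLeastAtMost_iff subsetD)
        then have "(F has_real_derivative f x) (at x within {?a..?b})"
          using der has_field_derivative_subset sub by blast
        then show "(F has_derivative (\<lambda>h. h * f x)) (at x within {?a..?b})"
          by (simp add: has_field_derivative_def mult.commute[of _ "f x"])
      qed
      then obtain x where x: "x \<in> {?a..?b}" "F ?b - F ?a = (?b - ?a) * f x" by auto
      have ba: "?b - ?a = 1 / n" using npos by (simp add: field_simps)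
      have "dist x ?b < d" using x(1) ba small by (auto simp: dist_real_def)
      moreover have "x \<in> {0..1}" using x(1) sub by (meson subsetD)
      moreover have "?b \<in> {0..1}" using ab sub by (meson atLeastAtMost_iff order_refl subsetD)
      ultimately have "\<bar>f x - f ?b\<bar> < e/2" using d(2)[of ?b x] by (simp add: dist_real_def)
      then have "\<bar>f x - f ?b\<bar> / n \<le> e/2/n" using npos
        by (intro divide_right_mono) auto
      moreover have "F ?b - F ?a - f ?b / n = (f x - f ?b) / n" using x(2) unfolding ba by (simp add: diff_divide_distrib)
      ultimately show ?thesis by (simp add: abs_divide)
    qed
    have tele: "(\<Sum>i<n. F (real (Suc i) / n) - F (real i / n)) = F 1 - F 0"
      using sum_lessThan_telescope[of "\<lambda>i. F (real i / n)" n] npos by simp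
    have F0: "F 0 = 0" by (simp add: F_def)
    have "\<bar>(\<Sum>i<n. f (real (Suc i) / real n)) / real n - integral {0..1} f\<bar>
       = \<bar>\<Sum>i<n. (f (real (Suc i) / real n) / n - (F (real (Suc i) / n) - F (real i / n)))\<bar>"
    proof -
      have "(\<Sum>i<n. (f (real (Suc i) / real n) / n - (F (real (Suc i) / n) - F (real i / n))))
          = (\<Sum>i<n. f (real (Suc i) / real n) / n) - (\<Sum>i<n. F (real (Suc i) / n) - F (real i / n))"
        by (rule sum_subtractf)
      also have "\<dots> = (\<Sum>i<n. f (real (Suc i) / real n)) / real n - integral {0..1} f"
        unfolding tele F0 by (simp add: sum_divide_distrib F_def)
      finally show ?thesis by simp
    qed
    also have "\<dots> \<le> (\<Sum>i<n. \<bar>f (real (Suc i) / real n) / n - (F (real (Suc i) / n) - F (real i / n))\<bar>)"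
      by (rule sum_abs)
    also have "\<dots> \<le> (\<Sum>i<n. e/2/n)"
      by (intro sum_mono) (use piece in \<open>auto simp: abs_minus_commute\<close>)
    also have "\<dots> = e/2" using npos by simp
    also have "\<dots> < e" using e by simp
    finally show "norm ((\<Sum>i<n. f (real (Suc i) / real n)) / real n - integral {0..1} f) < e"
      by simp
  qed
qed

lemma riemann_sum_conv_LBINT:
  fixes f :: "real \<Rightarrow> real"
  assumes cont: "continuous_on {0..1} f"
  shows "(\<lambda>n. (\<Sum>i<n. f (real (Suc i) / real n)) / real n) \<longlonglongrightarrow> (LBINT t=0..1. f t)"
proof -
  have "set_integrable lborel {0..1} f" by (rule borel_integrable_atLeastAtMost'[OF cont])
  then have "(LBINT t=0..1. f t) = integral {0..1} f"
    using interval_integral_eq_integral[of 0 1 f] by (simp add: zero_ereal_def one_ereal_def)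
  then show ?thesis using riemann_sum_conv[OF cont] by simp
qed

lemma (in prob_space) indep_sets_reindex:
  assumes ind: "indep_sets F I" and inj: "inj_on f J" and sub: "f ` J \<subseteq> I"
  shows "indep_sets (\<lambda>j. F (f j)) J"
  unfolding indep_sets_def
proof (intro conjI ballI allI impI)
  fix j assume "j \<in> J" then show "F (f j) \<subseteq> events" using ind sub unfolding indep_sets_def by auto
next
  fix K A assume K: "K \<subseteq> J" "K \<noteq> {}" "finite K" and A: "A \<in> Pi K (\<lambda>j. F (f j))"
  have injK: "inj_on f K" using inj K(1) by (rule inj_on_subset)
  define A' where "A' i = A (the_inv_into K f i)" for i
  have A'f: "A' (f k) = A k" if "k \<in> K" for k
    unfolding A'_def using the_inv_into_f_f[OF injK that] by simp
  have "prob (\<Inter>i\<in>f ` K. A' i) = (\<Prod>i\<in>f ` K. prob (A' i))"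
  proof (rule ind[unfolded indep_sets_def, THEN conjunct2, rule_format])
    show "f ` K \<subseteq> I" using K sub by auto
    show "f ` K \<noteq> {}" using K by auto
    show "finite (f ` K)" using K by auto
    show "A' \<in> Pi (f ` K) F" using A A'f by auto
  qed
  moreover have "(\<Inter>i\<in>f ` K. A' i) = (\<Inter>k\<in>K. A k)" using A'f by auto
  moreover have "(\<Prod>i\<in>f ` K. prob (A' i)) = (\<Prod>k\<in>K. prob (A k))"
    using prod.reindex[OF injK, of "\<lambda>i. prob (A' i)"] A'f by simp
  ultimately show "prob (\<Inter>k\<in>K. A k) = (\<Prod>k\<in>K. prob (A k))" by simp
qed

lemma (in prob_space) indep_vars_reindex:
  assumes ind: "indep_vars M' X I" and inj: "inj_on f J" and sub: "f ` J \<subseteq> I"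
  shows "indep_vars (\<lambda>j. M' (f j)) (\<lambda>j. X (f j)) J"
  unfolding indep_vars_def2
proof (intro conjI ballI)
  fix j assume "j \<in> J" then show "random_variable (M' (f j)) (X (f j))"
    using ind sub unfolding indep_vars_def2 by blast
next
  have "indep_sets (\<lambda>i. {X i -` A \<inter> space M |A. A \<in> sets (M' i)}) I"
    using ind unfolding indep_vars_def2 by blast
  from indep_sets_reindex[OF this inj sub]
  show "indep_sets (\<lambda>j. {X (f j) -` A \<inter> space M |A. A \<in> sets (M' (f j))}) J" .
qed

lemma same_law:
  fixes Z :: "'i \<Rightarrow> 'a \<Rightarrow> real" and W :: "'i \<Rightarrow> 'b \<Rightarrow> real"
  assumes M: "prob_space M" and N: "prob_space N" and J: "finite J" "J \<noteq> {}"
    and iZ: "prob_space.indep_vars M (\<lambda>_. borel) Z J"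
    and iW: "prob_space.indep_vars N (\<lambda>_. borel) W J"
    and dZ: "\<And>j. j \<in> J \<Longrightarrow> distr M borel (Z j) = \<mu>"
    and dW: "\<And>j. j \<in> J \<Longrightarrow> distr N borel (W j) = \<mu>"
    and g: "g \<in> borel_measurable (PiM J (\<lambda>_. borel))"
  shows "distr M borel (\<lambda>\<omega>. g (\<lambda>j\<in>J. Z j \<omega>)) = distr N borel (\<lambda>\<omega>. g (\<lambda>j\<in>J. W j \<omega>))"
proof -
  have rZ: "\<And>j. j \<in> J \<Longrightarrow> Z j \<in> borel_measurable M"
    using prob_space.indep_vars_def2[OF M, THEN iffD1, OF iZ] by simp
  have rW: "\<And>j. j \<in> J \<Longrightarrow> W j \<in> borel_measurable N"
    using prob_space.indep_vars_def2[OF N, THEN iffD1, OF iW] by simp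
  have vZ: "(\<lambda>x. \<lambda>i\<in>J. Z i x) \<in> measurable M (PiM J (\<lambda>_. borel))"
    using rZ by (intro measurable_restrict) auto
  have vW: "(\<lambda>x. \<lambda>i\<in>J. W i x) \<in> measurable N (PiM J (\<lambda>_. borel))"
    using rW by (intro measurable_restrict) auto
  have DZ: "distr M (PiM J (\<lambda>_. borel)) (\<lambda>x. \<lambda>i\<in>J. Z i x) = PiM J (\<lambda>_. \<mu>)"
  proof -
    have "distr M (PiM J (\<lambda>_. borel)) (\<lambda>x. \<lambda>i\<in>J. Z i x) = PiM J (\<lambda>i. distr M borel (Z i))"
      using prob_space.indep_vars_iff_distr_eq_PiM'[OF M J(2), where M'="\<lambda>_. borel" and X=Z, OF rZ] iZ by blast
    also have "\<dots> = PiM J (\<lambda>_. \<mu>)" by (rule PiM_cong) (auto simp: dZ)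
    finally show ?thesis .
  qed
  have DW: "distr N (PiM J (\<lambda>_. borel)) (\<lambda>x. \<lambda>i\<in>J. W i x) = PiM J (\<lambda>_. \<mu>)"
  proof -
    have "distr N (PiM J (\<lambda>_. borel)) (\<lambda>x. \<lambda>i\<in>J. W i x) = PiM J (\<lambda>i. distr N borel (W i))"
      using prob_space.indep_vars_iff_distr_eq_PiM'[OF N J(2), where M'="\<lambda>_. borel" and X=W, OF rW] iW by blast
    also have "\<dots> = PiM J (\<lambda>_. \<mu>)" by (rule PiM_cong) (auto simp: dW)
    finally show ?thesis .
  qed
  have "distr M borel (\<lambda>\<omega>. g (\<lambda>j\<in>J. Z j \<omega>)) = distr (distr M (PiM J (\<lambda>_. borel)) (\<lambda>x. \<lambda>i\<in>J. Z i x)) borel g"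
    using distr_distr[OF g vZ] by (simp add: comp_def)
  also have "\<dots> = distr (distr N (PiM J (\<lambda>_. borel)) (\<lambda>x. \<lambda>i\<in>J. W i x)) borel g"
    unfolding DZ DW ..
  also have "\<dots> = distr N borel (\<lambda>\<omega>. g (\<lambda>j\<in>J. W j \<omega>))"
    using distr_distr[OF g vW] by (simp add: comp_def)
  finally show ?thesis .
qed

lemma char_distr_integral:
  assumes "f \<in> borel_measurable M"
  shows "char (distr M borel f) t = (CLINT x|M. iexp (t * f x))"
  unfolding char_def using assms by (subst integral_distr) auto

lemma char_distr_scale:
  assumes "f \<in> borel_measurable M"
  shows "char (distr M borel (\<lambda>x. c * f x)) t = char (distr M borel f) (t * c)"
  using assms by (simp add: char_distr_integral mult.assoc)

lemma char_distr_cong: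
  assumes "\<And>x. x \<in> space M \<Longrightarrow> f x = g x"
  shows "distr M borel f = distr M borel g"
  using assms by (intro distr_cong) auto

locale bm =
  fixes Q :: "'b measure" and B :: "real \<Rightarrow> 'b \<Rightarrow> real"
  assumes BM: "brownian_motion Q B"
begin

lemma Qp: "prob_space Q" using BM unfolding brownian_motion_def by blast

sublocale prob_space Q by (rule Qp)

lemma Bmeas: "0 \<le> t \<Longrightarrow> B t \<in> borel_measurable Q"
  using BM unfolding brownian_motion_def by blast

lemma B0: "\<omega> \<in> space Q \<Longrightarrow> B 0 \<omega> = 0"
  using BM unfolding brownian_motion_def by blast

lemma Bcont: "\<omega> \<in> space Q \<Longrightarrow> continuous_on {0..} (\<lambda>t. B t \<omega>)"
  using BM unfolding brownian_motion_def by blast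

lemma Bdist: "0 \<le> s \<Longrightarrow> s < t \<Longrightarrow>
   distributed Q lborel (\<lambda>\<omega>. B t \<omega> - B s \<omega>) (normal_density 0 (sqrt (t - s)))"
  using BM unfolding brownian_motion_def by blast

lemma Bindep: "0 \<le> tt 0 \<Longrightarrow> strict_mono tt \<Longrightarrow>
   indep_vars (\<lambda>_. borel) (\<lambda>i \<omega>. B (tt (Suc i)) \<omega> - B (tt i) \<omega>) {..<n}"
  using BM unfolding brownian_motion_def by blast

lemma Bdist0: "0 < t \<Longrightarrow> distributed Q lborel (\<lambda>\<omega>. B t \<omega> - B 0 \<omega>) (normal_density 0 (sqrt t))"
  using Bdist[of 0 t] by simp

lemma EB2:
  assumes t: "0 < t"
  shows "integrable Q (\<lambda>\<omega>. (B t \<omega>)\<^sup>2)" "(\<integral>\<omega>. (B t \<omega>)\<^sup>2 \<partial>Q) = t"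
proof -
  have D: "distributed Q lborel (\<lambda>\<omega>. B t \<omega> - B 0 \<omega>) (normal_density 0 (sqrt t))"
    using Bdist0[OF t] .
  have eq: "\<And>\<omega>. \<omega> \<in> space Q \<Longrightarrow> (B t \<omega> - B 0 \<omega>)\<^sup>2 = (B t \<omega>)\<^sup>2" using B0 by simp
  have "integrable lborel (\<lambda>x. normal_density 0 (sqrt t) x * x\<^sup>2)"
    using integrable_normal_moment[where \<mu>=0 and \<sigma>="sqrt t" and k=2] t by simp
  then have "integrable Q (\<lambda>\<omega>. (B t \<omega> - B 0 \<omega>)\<^sup>2)"
    using distributed_integrable[OF D, of "\<lambda>x. x\<^sup>2"] by simp
  then show "integrable Q (\<lambda>\<omega>. (B t \<omega>)\<^sup>2)"
  proof -
    have "integrable Q (\<lambda>\<omega>. (B t \<omega> - B 0 \<omega>)\<^sup>2) \<longleftrightarrow> integrable Q (\<lambda>\<omega>. (B t \<omega>)\<^sup>2)"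
      by (rule Bochner_Integration.integrable_cong) (auto simp: eq)
    then show ?thesis using \<open>integrable Q (\<lambda>\<omega>. (B t \<omega> - B 0 \<omega>)\<^sup>2)\<close> by simp
  qed
  have "(\<integral>x. normal_density 0 (sqrt t) x * x\<^sup>2 \<partial>lborel) = t"
    using integral_normal_moment_even[where \<mu>=0 and \<sigma>="sqrt t" and k=1] t by simp
  then have "(\<integral>\<omega>. (B t \<omega> - B 0 \<omega>)\<^sup>2 \<partial>Q) = t"
    using distributed_integral[OF D, of "\<lambda>x. x\<^sup>2"] by simp
  then show "(\<integral>\<omega>. (B t \<omega>)\<^sup>2 \<partial>Q) = t"
    using eq by (simp cong: Bochner_Integration.integral_cong)
qed

definition R :: "nat \<Rightarrow> 'b \<Rightarrow> real" where
  "R L \<omega> = (\<Sum>i<L. (B (real (Suc i) / real L) \<omega>)\<^sup>2) / real L"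

definition I :: "'b \<Rightarrow> real" where
  "I \<omega> = (LBINT t=0..1. (B t \<omega>)\<^sup>2)"

lemma R_meas: "R L \<in> borel_measurable Q"
  unfolding R_def by (intro borel_measurable_divide borel_measurable_sum borel_measurable_power Bmeas
    borel_measurable_const) simp

lemma R_nonneg: "0 \<le> R L \<omega>"
  unfolding R_def by (intro divide_nonneg_nonneg sum_nonneg) auto

lemma R_conv: "\<omega> \<in> space Q \<Longrightarrow> (\<lambda>L. R L \<omega>) \<longlonglongrightarrow> I \<omega>"
proof -
  assume w: "\<omega> \<in> space Q"
  have "continuous_on {0..1} (\<lambda>t. (B t \<omega>)\<^sup>2)"
    by (intro continuous_on_power continuous_on_subset[OF Bcont[OF w]]) auto
  from riemann_sum_conv_LBINT[OF this] show ?thesis unfolding R_def I_def .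
qed

lemma I_meas: "I \<in> borel_measurable Q"
  by (rule borel_measurable_LIMSEQ_real[OF R_conv R_meas])

lemma I_nonneg: "\<omega> \<in> space Q \<Longrightarrow> 0 \<le> I \<omega>"
  by (rule LIMSEQ_le_const[OF R_conv]) (auto intro: R_nonneg)

lemma ER:
  assumes L: "0 < L"
  shows "integrable Q (R L)" "(\<integral>\<omega>. R L \<omega> \<partial>Q) = (real L + 1) / (2 * real L)"
proof -
  have pos: "\<And>i. 0 < real (Suc i) / real L" using L by simp
  show "integrable Q (R L)" unfolding R_def
    by (intro integrable_divide) (rule Bochner_Integration.integrable_sum, rule EB2(1), rule pos)
  have "(\<integral>\<omega>. R L \<omega> \<partial>Q) = (\<Sum>i<L. (\<integral>\<omega>. (B (real (Suc i) / real L) \<omega>)\<^sup>2 \<partial>Q)) / real L"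
  proof -
    have "(\<integral>\<omega>. (\<Sum>i<L. (B (real (Suc i) / real L) \<omega>)\<^sup>2) \<partial>Q) = (\<Sum>i<L. (\<integral>\<omega>. (B (real (Suc i) / real L) \<omega>)\<^sup>2 \<partial>Q))"
      by (rule Bochner_Integration.integral_sum) (rule EB2(1)[OF pos])
    then show ?thesis unfolding R_def by simp
  qed
  also have "\<dots> = (\<Sum>i<L. real (Suc i) / real L) / real L" by (intro arg_cong[where f="\<lambda>x. x / real L"] sum.cong refl EB2(2)[OF pos])
  also have "\<dots> = (\<Sum>i<L. real (Suc i)) / (real L * real L)" by (simp add: sum_divide_distrib)
  also have "(\<Sum>i<L. real (Suc i)) = real L * (real L + 1) / 2"
  proof -
    have "(\<Sum>i<L. real (Suc i)) = (\<Sum>i\<in>{1..L}. real i)"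
      by (rule sum.reindex_bij_witness[of _ "\<lambda>i. i - 1" Suc]) auto
    also have "\<dots> = real L * (real L + 1) / 2"
      by (induction L) (auto simp: field_simps)
    finally show ?thesis .
  qed
  also have "(real L * (real L + 1) / 2) / (real L * real L) = (real L + 1) / (2 * real L)"
    using L by (simp add: field_simps)
  finally show "(\<integral>\<omega>. R L \<omega> \<partial>Q) = (real L + 1) / (2 * real L)" .
qed

lemma ER_le: "0 < L \<Longrightarrow> (\<integral>\<omega>. R L \<omega> \<partial>Q) \<le> 1"
  by (simp add: ER(2) field_simps)

lemma EI: "integrable Q I" "(\<integral>\<omega>. I \<omega> \<partial>Q) \<le> 1"
proof -
  have "(\<integral>\<^sup>+\<omega>. ennreal (I \<omega>) \<partial>Q) = (\<integral>\<^sup>+\<omega>. liminf (\<lambda>L. ennreal (R L \<omega>)) \<partial>Q)"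
  proof (rule nn_integral_cong)
    fix \<omega> assume w: "\<omega> \<in> space Q"
    have "(\<lambda>L. ennreal (R L \<omega>)) \<longlonglongrightarrow> ennreal (I \<omega>)"
      by (rule tendsto_ennrealI[OF R_conv[OF w]])
    then show "ennreal (I \<omega>) = liminf (\<lambda>L. ennreal (R L \<omega>))"
      by (simp add: lim_imp_Liminf)
  qed
  also have "\<dots> \<le> liminf (\<lambda>L. \<integral>\<^sup>+\<omega>. ennreal (R L \<omega>) \<partial>Q)"
    by (rule nn_integral_liminf) (rule measurable_compose[OF R_meas], simp)
  also have "\<dots> \<le> 1"
  proof -
    have "\<forall>\<^sub>F L in sequentially. (\<integral>\<^sup>+\<omega>. ennreal (R L \<omega>) \<partial>Q) \<le> 1"
    proof (rule eventually_sequentiallyI[of 1])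
      fix L :: nat assume "1 \<le> L"
      then have L: "0 < L" by simp
      have "(\<integral>\<^sup>+\<omega>. ennreal (R L \<omega>) \<partial>Q) = ennreal (\<integral>\<omega>. R L \<omega> \<partial>Q)"
        by (rule nn_integral_eq_integral[OF ER(1)[OF L]]) (simp add: R_nonneg)
      also have "\<dots> \<le> 1" using ER_le[OF L] by simp
      finally show "(\<integral>\<^sup>+\<omega>. ennreal (R L \<omega>) \<partial>Q) \<le> 1" .
    qed
    then show ?thesis by (intro Liminf_le) auto
  qed
  finally have nn: "(\<integral>\<^sup>+\<omega>. ennreal (I \<omega>) \<partial>Q) \<le> 1" .
  show int: "integrable Q I"
    by (rule integrableI_nonneg[OF I_meas]) (use nn I_nonneg in \<open>auto intro!: AE_I2 simp: order_le_less_trans\<close>)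
  have "ennreal (\<integral>\<omega>. I \<omega> \<partial>Q) = (\<integral>\<^sup>+\<omega>. ennreal (I \<omega>) \<partial>Q)"
    by (rule nn_integral_eq_integral[OF int, symmetric]) (simp add: I_nonneg)
  with nn have "ennreal (\<integral>\<omega>. I \<omega> \<partial>Q) \<le> 1" by simp
  then show "(\<integral>\<omega>. I \<omega> \<partial>Q) \<le> 1" by (simp add: ennreal_le_1)
qed

end

definition gsum :: "nat \<Rightarrow> (nat \<Rightarrow> real) \<Rightarrow> real" where
  "gsum L z = (\<Sum>i<L. (\<Sum>j\<le>i. z j)\<^sup>2)"

lemma gsum_meas: "gsum L \<in> borel_measurable (PiM {..<L} (\<lambda>_. borel))"
  unfolding gsum_def
proof (intro borel_measurable_sum borel_measurable_power)
  fix i j assume "i \<in> {..<L}" "j \<in> atMost i"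
  then have "j \<in> {..<L}" by auto
  then show "(\<lambda>x. x j) \<in> borel_measurable (PiM {..<L} (\<lambda>_. borel))"
    by (rule measurable_component_singleton)
qed

lemma gsum_restrict: "gsum L (\<lambda>j\<in>{..<L}. z j) = gsum L z"
  unfolding gsum_def by (intro sum.cong refl arg_cong[where f="\<lambda>x. x\<^sup>2"]) auto

definition std_normal_measure :: "real measure" where
  "std_normal_measure = density lborel (\<lambda>x. ennreal (std_normal_density x))"

lemma distributed_std_normal_distr:
  assumes "distributed M lborel X std_normal_density"
  shows "distr M borel X = std_normal_measure"
proof -
  have "distr M borel X = distr M lborel X" by (intro distr_cong) auto
  also have "\<dots> = std_normal_measure"
    using distributed_distr_eq_density[OF assms] unfolding std_normal_measure_def .
  finally show ?thesis .
qed

context bm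
begin

definition D :: "nat \<Rightarrow> nat \<Rightarrow> 'b \<Rightarrow> real" where
  "D L j \<omega> = sqrt (real L) * (B (real (Suc j) / real L) \<omega> - B (real j / real L) \<omega>)"

lemma D_indep:
  assumes L: "0 < L"
  shows "indep_vars (\<lambda>_. borel) (D L) {..<L}"
proof -
  have sm: "strict_mono (\<lambda>i. real i / real L)"
    using L by (intro strict_monoI) (simp add: divide_strict_right_mono)
  have "indep_vars (\<lambda>_. borel) (\<lambda>i \<omega>. B (real (Suc i) / real L) \<omega> - B (real i / real L) \<omega>) {..<L}"
    using Bindep[of "\<lambda>i. real i / real L", OF _ sm] by simp
  from indep_vars_compose2[OF this, of "\<lambda>_ x. sqrt (real L) * x" "\<lambda>_. borel"]
  show ?thesis unfolding D_def[abs_def] by simp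
qed

lemma D_law:
  assumes L: "0 < L"
  shows "distr Q borel (D L j) = std_normal_measure"
proof -
  have lt: "real j / real L < real (Suc j) / real L" using L by (simp add: divide_strict_right_mono)
  have d: "distributed Q lborel (\<lambda>\<omega>. B (real (Suc j) / real L) \<omega> - B (real j / real L) \<omega>)
     (normal_density 0 (sqrt (real (Suc j) / real L - real j / real L)))"
    by (rule Bdist) (use lt in auto)
  have e: "real (Suc j) / real L - real j / real L = 1 / real L" by (simp add: diff_divide_distrib[symmetric])
  have pos: "0 < sqrt (real (Suc j) / real L - real j / real L)" using e L by simp
  have "distributed Q lborel (\<lambda>\<omega>. 0 + sqrt (real L) * (B (real (Suc j) / real L) \<omega> - B (real j / real L) \<omega>))
     (normal_density (0 + sqrt (real L) * 0) (\<bar>sqrt (real L)\<bar> * sqrt (real (Suc j) / real L - real j / real L)))"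
    by (rule normal_density_affine[OF d pos]) (use L in simp)
  moreover have "\<bar>sqrt (real L)\<bar> * sqrt (real (Suc j) / real L - real j / real L) = 1"
    unfolding e using L by (simp add: real_sqrt_mult[symmetric])
  ultimately have "distributed Q lborel (D L j) std_normal_density"
    unfolding D_def[abs_def] by simp
  then show ?thesis by (rule distributed_std_normal_distr)
qed

lemma D_meas: "0 < L \<Longrightarrow> D L j \<in> borel_measurable Q"
  unfolding D_def by (intro borel_measurable_times borel_measurable_diff borel_measurable_const Bmeas) auto

lemma gsum_D:
  assumes w: "\<omega> \<in> space Q" and L: "0 < L"
  shows "gsum L (\<lambda>j. D L j \<omega>) = (real L)\<^sup>2 * R L \<omega>"
proof -
  have part: "(\<Sum>j\<le>i. D L j \<omega>) = sqrt (real L) * B (real (Suc i) / real L) \<omega>" for i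
  proof -
    have "(\<Sum>j\<le>i. D L j \<omega>) = sqrt (real L) * (\<Sum>j<Suc i. B (real (Suc j) / real L) \<omega> - B (real j / real L) \<omega>)"
      unfolding D_def by (simp add: sum_distrib_left lessThan_Suc_atMost)
    also have "(\<Sum>j<Suc i. B (real (Suc j) / real L) \<omega> - B (real j / real L) \<omega>) = B (real (Suc i) / real L) \<omega> - B (real 0 / real L) \<omega>"
      by (rule sum_lessThan_telescope[of "\<lambda>j. B (real j / real L) \<omega>"])
    finally show ?thesis using B0[OF w] by simp
  qed
  have "gsum L (\<lambda>j. D L j \<omega>) = (\<Sum>i<L. real L * (B (real (Suc i) / real L) \<omega>)\<^sup>2)"
    unfolding gsum_def part by (simp add: power_mult_distrib)
  also have "\<dots> = (real L)\<^sup>2 * R L \<omega>"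
    unfolding R_def using L by (simp add: sum_distrib_left[symmetric] power2_eq_square)
  finally show ?thesis .
qed

end

lemma dyadic_unique:
  assumes "(2::nat)^p \<le> i" "i < 2^(Suc p)" "2^q \<le> i" "i < 2^(Suc q)"
  shows "p = q"
proof (rule ccontr)
  assume "p \<noteq> q"
  then consider "Suc p \<le> q" | "Suc q \<le> p" by linarith
  then show False
  proof cases
    case 1 then have "(2::nat)^(Suc p) \<le> 2^q" by (rule power_increasing) simp
    then show False using assms by linarith
  next
    case 2 then have "(2::nat)^(Suc q) \<le> 2^p" by (rule power_increasing) simp
    then show False using assms by linarith
  qed
qed

locale xs =
  fixes M :: "'a measure" and X :: "nat \<Rightarrow> 'a \<Rightarrow> real" and a :: "nat \<Rightarrow> nat"
  assumes Mp: "prob_space M"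
    and X_indep: "prob_space.indep_vars M (\<lambda>_. borel) X {1..}"
    and X_normal: "\<And>i. 1 \<le> i \<Longrightarrow> distributed M lborel (X i) std_normal_density"
    and a_def: "\<And>k. a k = 2 ^ (k - 1)"
begin

sublocale prob_space M by (rule Mp)

lemma Xmeas: "1 \<le> i \<Longrightarrow> X i \<in> borel_measurable M"
  using indep_vars_def2[THEN iffD1, OF X_indep] by simp

lemma Xlaw: "1 \<le> i \<Longrightarrow> distr M borel (X i) = std_normal_measure"
  by (rule distributed_std_normal_distr[OF X_normal])

definition Sblk :: "nat \<Rightarrow> 'a \<Rightarrow> real" where
  "Sblk p \<omega> = gsum (2^p) (\<lambda>j. X (2^p + j) \<omega>)"

lemma Wsum_blk:
  assumes "2^p \<le> i" "i < 2^(Suc p)"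
  shows "Wsum a X i \<omega> = (\<Sum>j=2^p..i. X j \<omega>)"
  unfolding Wsum_def tseq_blk[OF a_def assms] ..

lemma blocksum: "(\<Sum>i\<in>{2^p..<2^(Suc p)}. (Wsum a X i \<omega>)\<^sup>2) = Sblk p \<omega>"
proof -
  have "(\<Sum>i\<in>{2^p..<2^(Suc p)}. (Wsum a X i \<omega>)\<^sup>2) = (\<Sum>i<2^p. (Wsum a X (2^p + i) \<omega>)\<^sup>2)"
    by (rule sum.reindex_bij_witness[of _ "\<lambda>i. 2^p + i" "\<lambda>i. i - 2^p"]) auto
  also have "\<dots> = (\<Sum>i<2^p. (\<Sum>j\<le>i. X (2^p + j) \<omega>)\<^sup>2)"
  proof (rule sum.cong[OF refl])
    fix i assume i: "i \<in> {..<(2::nat)^p}"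
    have "Wsum a X (2^p + i) \<omega> = (\<Sum>j=2^p..2^p+i. X j \<omega>)"
      by (rule Wsum_blk) (use i in auto)
    also have "\<dots> = (\<Sum>j\<le>i. X (2^p + j) \<omega>)"
      by (rule sum.reindex_bij_witness[of _ "\<lambda>j. 2^p + j" "\<lambda>j. j - 2^p"]) auto
    finally show "(Wsum a X (2^p + i) \<omega>)\<^sup>2 = (\<Sum>j\<le>i. X (2^p + j) \<omega>)\<^sup>2" by simp
  qed
  finally show ?thesis unfolding Sblk_def gsum_def .
qed

lemma Vsum_lt: "(\<Sum>i\<in>{1..<2^m}. (Wsum a X i \<omega>)\<^sup>2) = (\<Sum>p<m. Sblk p \<omega>)"
proof (induction m)
  case 0 then show ?case by simp
next
  case (Suc m)
  have "(\<Sum>i\<in>{1..<2^(Suc m)}. (Wsum a X i \<omega>)\<^sup>2) =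
      (\<Sum>i\<in>{1..<2^m}. (Wsum a X i \<omega>)\<^sup>2) + (\<Sum>i\<in>{2^m..<2^(Suc m)}. (Wsum a X i \<omega>)\<^sup>2)"
    by (rule sum.atLeastLessThan_concat[symmetric]) auto
  then show ?case using Suc blocksum by simp
qed

lemma V_decomp: "Vstat a X (2^m) \<omega> = (\<Sum>p<m. Sblk p \<omega>) + (X (2^m) \<omega>)\<^sup>2"
proof -
  have W: "Wsum a X (2^m) \<omega> = X (2^m) \<omega>"
    using Wsum_blk[of m "2^m" \<omega>] by simp
  have "Vstat a X (2^m) \<omega> = (\<Sum>i\<in>{1..<Suc (2^m)}. (Wsum a X i \<omega>)\<^sup>2)"
    unfolding Vstat_def by (simp add: atLeastLessThanSuc_atLeastAtMost)
  also have "\<dots> = (\<Sum>i\<in>{1..<2^m}. (Wsum a X i \<omega>)\<^sup>2) + (Wsum a X (2^m) \<omega>)\<^sup>2"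
    by (rule sum.atLeastLessThan_Suc) simp
  finally show ?thesis unfolding Vsum_lt W .
qed

definition Zb :: "nat \<Rightarrow> nat \<Rightarrow> 'a \<Rightarrow> real" where
  "Zb m p = (if p < m then Sblk p else (\<lambda>\<omega>. (X (2^m) \<omega>)\<^sup>2))"

definition Kb :: "nat \<Rightarrow> nat \<Rightarrow> nat set" where
  "Kb m p = (if p < m then {2^p..<2^(Suc p)} else {2^m})"

definition Yb :: "nat \<Rightarrow> nat \<Rightarrow> (nat \<Rightarrow> real) \<Rightarrow> real" where
  "Yb m p y = (if p < m then gsum (2^p) (\<lambda>j. y (2^p + j)) else (y (2^m))\<^sup>2)"

lemma Kb_sub: "p \<le> m \<Longrightarrow> Kb m p \<subseteq> {2^p..<2^(Suc p)}"
  unfolding Kb_def by auto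

lemma Zb_indep: "indep_vars (\<lambda>_. borel) (Zb m) {..m}"
proof -
  have K1: "Kb m p \<subseteq> {1..}" if "p \<in> {..m}" for p
  proof -
    have "Kb m p \<subseteq> {2^p..<2^(Suc p)}" using Kb_sub that by simp
    moreover have "(1::nat) \<le> 2^p" by simp
    ultimately show ?thesis by auto
  qed
  have disj: "disjoint_family_on (Kb m) {..m}"
    unfolding disjoint_family_on_def
  proof (intro ballI impI)
    fix p q assume pq: "p \<in> {..m}" "q \<in> {..m}" "p \<noteq> q"
    show "Kb m p \<inter> Kb m q = {}"
    proof (rule ccontr)
      assume "Kb m p \<inter> Kb m q \<noteq> {}"
      then obtain i where "i \<in> Kb m p" "i \<in> Kb m q" by blast
      then have "i \<in> {2^p..<2^(Suc p)}" "i \<in> {2^q..<2^(Suc q)}" using Kb_sub pq by blast+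
      then have "p = q" using dyadic_unique by auto
      then show False using pq by simp
    qed
  qed
  have ind: "indep_vars (\<lambda>p. PiM (Kb m p) (\<lambda>_. borel)) (\<lambda>p \<omega>. restrict (\<lambda>i. X i \<omega>) (Kb m p)) {..m}"
    by (rule indep_vars_restrict[OF X_indep K1 disj])
  have meas: "Yb m p \<in> borel_measurable (PiM (Kb m p) (\<lambda>_. borel))" if "p \<in> {..m}" for p
  proof (cases "p < m")
    case True
    have "(\<lambda>y. gsum (2^p) (\<lambda>j. y (2^p + j))) \<in> borel_measurable (PiM (Kb m p) (\<lambda>_. borel))"
      unfolding gsum_def
    proof (intro borel_measurable_sum borel_measurable_power)
      fix i j assume "i \<in> {..<(2::nat)^p}" "j \<in> atMost i"
      then have "2^p + j \<in> Kb m p" using True by (auto simp: Kb_def)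
      then show "(\<lambda>y. y (2^p + j)) \<in> borel_measurable (PiM (Kb m p) (\<lambda>_. borel))"
        by (rule measurable_component_singleton)
    qed
    moreover have "Yb m p = (\<lambda>y. gsum (2^p) (\<lambda>j. y (2^p + j)))" using True by (intro ext) (simp add: Yb_def)
    ultimately show ?thesis by simp
  next
    case False
    have "2^m \<in> Kb m p" using False by (simp add: Kb_def)
    then have "(\<lambda>y. y (2^m)) \<in> borel_measurable (PiM (Kb m p) (\<lambda>_. borel))"
      by (rule measurable_component_singleton)
    then have "(\<lambda>y::nat\<Rightarrow>real. (y (2^m))\<^sup>2) \<in> borel_measurable (PiM (Kb m p) (\<lambda>_. borel))" by (rule borel_measurable_power)
    moreover have "Yb m p = (\<lambda>y. (y (2^m))\<^sup>2)" using False by (intro ext) (simp add: Yb_def)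
    ultimately show ?thesis by simp
  qed
  have "indep_vars (\<lambda>_. borel) (\<lambda>p \<omega>. Yb m p (restrict (\<lambda>i. X i \<omega>) (Kb m p))) {..m}"
    by (rule indep_vars_compose2[OF ind meas])
  moreover have "Yb m p (restrict (\<lambda>i. X i \<omega>) (Kb m p)) = Zb m p \<omega>" for p \<omega>
  proof (cases "p < m")
    case True
    have "gsum (2^p) (\<lambda>j. restrict (\<lambda>i. X i \<omega>) (Kb m p) (2^p + j)) = gsum (2^p) (\<lambda>j. X (2^p + j) \<omega>)"
      unfolding gsum_def using True by (intro sum.cong refl arg_cong[where f="\<lambda>x. x\<^sup>2"]) (auto simp: Kb_def)
    then show ?thesis using True by (simp add: Yb_def Zb_def Sblk_def)
  next
    case False then show ?thesis by (simp add: Yb_def Zb_def Kb_def)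
  qed
  ultimately show ?thesis by simp
qed

lemma char_V:
  "char (distr M borel (\<lambda>\<omega>. Vstat a X (2^m) \<omega> / c)) t =
    (\<Prod>p<m. char (distr M borel (Sblk p)) (t / c)) * char (distr M borel (\<lambda>\<omega>. (X (2^m) \<omega>)\<^sup>2)) (t / c)"
proof -
  have "distr M borel (\<lambda>\<omega>. Vstat a X (2^m) \<omega> / c) = distr M borel (\<lambda>\<omega>. (1/c) * (\<Sum>p\<in>{..m}. Zb m p \<omega>))"
    by (intro distr_cong refl) (simp add: V_decomp Zb_def atMost_Suc lessThan_Suc_atMost[symmetric])
  then have "char (distr M borel (\<lambda>\<omega>. Vstat a X (2^m) \<omega> / c)) t = char (distr M borel (\<lambda>\<omega>. \<Sum>p\<in>{..m}. Zb m p \<omega>)) (t * (1/c))"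
  proof -
    have rv: "(\<lambda>\<omega>. \<Sum>p\<in>{..m}. Zb m p \<omega>) \<in> borel_measurable M"
      using Zb_indep[of m] by (intro borel_measurable_sum) (auto simp: indep_vars_def2)
    show ?thesis using char_distr_scale[OF rv, of "1/c" t] \<open>distr M borel _ = _\<close> by simp
  qed
  also have "\<dots> = (\<Prod>p\<in>{..m}. char (distr M borel (Zb m p)) (t * (1/c)))"
    by (rule char_distr_sum[OF Zb_indep])
  also have "\<dots> = (\<Prod>p<m. char (distr M borel (Sblk p)) (t / c)) * char (distr M borel (\<lambda>\<omega>. (X (2^m) \<omega>)\<^sup>2)) (t / c)"
    by (simp add: lessThan_Suc_atMost[symmetric] Zb_def)
  finally show ?thesis .
qed

end

lemma cmod_iexp_diff: "cmod (iexp x - iexp y) \<le> \<bar>x - y\<bar>"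
proof -
  have "iexp x - iexp y = iexp y * (iexp (x - y) - 1)"
    by (simp add: algebra_simps flip: exp_add)
  moreover have "cmod (iexp (x - y) - 1) \<le> \<bar>x - y\<bar>"
    using iexp_approx1[of "x - y" 0] by simp
  ultimately show ?thesis by (simp add: norm_mult)
qed

lemma cmod_iexp_diff_le2: "cmod (iexp x - iexp y) \<le> 2"
proof -
  have "cmod (iexp x - iexp y) \<le> cmod (iexp x) + cmod (iexp y)" by (rule norm_triangle_ineq4)
  then show ?thesis by simp
qed

context bm
begin

lemma integrable_iexpQ: "f \<in> borel_measurable Q \<Longrightarrow> integrable Q (\<lambda>\<omega>. iexp (f \<omega>))"
  by (rule integrable_const_bound[where B=1]) auto

lemma meas_diffQ:
  assumes "f \<in> borel_measurable Q" "g \<in> borel_measurable Q"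
  shows "(\<lambda>\<omega>. cmod (iexp (f \<omega>) - iexp (g \<omega>))) \<in> borel_measurable Q"
proof -
  note [measurable] = assms
  show ?thesis by measurable
qed

lemma int_diffQ:
  assumes "f \<in> borel_measurable Q" "g \<in> borel_measurable Q"
  shows "integrable Q (\<lambda>\<omega>. cmod (iexp (f \<omega>) - iexp (g \<omega>)))"
  by (rule integrable_const_bound[where B=2]) (auto simp del: of_real_mult intro!: cmod_iexp_diff_le2 meas_diffQ assms)

lemma main_conv:
  fixes \<alpha> :: "nat \<Rightarrow> nat \<Rightarrow> real" and \<beta> :: "nat \<Rightarrow> real" and L :: "nat \<Rightarrow> nat \<Rightarrow> nat"
  assumes \<alpha>lim: "\<And>j. (\<lambda>m. \<alpha> m j) \<longlonglongrightarrow> \<beta> j"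
    and \<alpha>bd: "\<And>m j. j < m \<Longrightarrow> \<bar>\<alpha> m j\<bar> \<le> C / 4^j"
    and \<beta>bd: "\<And>j. \<bar>\<beta> j\<bar> \<le> C / 4^j"
    and Llim: "\<And>j. filterlim (\<lambda>m. L m j) at_top sequentially"
    and Lpos: "\<And>m j. j < m \<Longrightarrow> 0 < L m j"
  shows "(\<lambda>m. (\<Prod>j<m. CLINT \<omega>|Q. iexp (\<alpha> m j * R (L m j) \<omega>)) - (\<Prod>j<m. CLINT \<omega>|Q. iexp (\<beta> j * I \<omega>))) \<longlonglongrightarrow> 0"
proof -
  define h where "h m j = (if j < m then (\<integral>\<omega>. cmod (iexp (\<alpha> m j * R (L m j) \<omega>) - iexp (\<beta> j * I \<omega>)) \<partial>Q) else 0)" for m j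
  have Rm: "\<And>L. R L \<in> borel_measurable Q" by (rule R_meas)
  have Im: "I \<in> borel_measurable Q" by (rule I_meas)
  have C0: "0 \<le> C" using \<beta>bd[of 0] by simp
  have stepa: "cmod ((\<Prod>j<m. CLINT \<omega>|Q. iexp (\<alpha> m j * R (L m j) \<omega>)) - (\<Prod>j<m. CLINT \<omega>|Q. iexp (\<beta> j * I \<omega>)))
      \<le> (\<Sum>j<m. h m j)" for m
  proof -
    have n1: "cmod (CLINT \<omega>|Q. iexp (f \<omega>)) \<le> 1" for f
    proof -
      have "cmod (CLINT \<omega>|Q. iexp (f \<omega>)) \<le> (\<integral>\<omega>. cmod (iexp (f \<omega>)) \<partial>Q)" by (rule integral_norm_bound)
      also have "\<dots> = 1" by (simp add: prob_space)
      finally show ?thesis .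
    qed
    have "cmod ((\<Prod>j<m. CLINT \<omega>|Q. iexp (\<alpha> m j * R (L m j) \<omega>)) - (\<Prod>j<m. CLINT \<omega>|Q. iexp (\<beta> j * I \<omega>)))
       \<le> (\<Sum>j<m. cmod ((CLINT \<omega>|Q. iexp (\<alpha> m j * R (L m j) \<omega>)) - (CLINT \<omega>|Q. iexp (\<beta> j * I \<omega>))))"
      by (rule norm_prod_diff) (rule n1)+
    also have "\<dots> \<le> (\<Sum>j<m. h m j)"
    proof (rule sum_mono)
      fix j assume j: "j \<in> {..<m}"
      have "(CLINT \<omega>|Q. iexp (\<alpha> m j * R (L m j) \<omega>)) - (CLINT \<omega>|Q. iexp (\<beta> j * I \<omega>))
          = (CLINT \<omega>|Q. iexp (\<alpha> m j * R (L m j) \<omega>) - iexp (\<beta> j * I \<omega>))"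
        by (rule Bochner_Integration.integral_diff[symmetric]) (intro integrable_iexpQ borel_measurable_times borel_measurable_const Rm Im)+
      then show "cmod ((CLINT \<omega>|Q. iexp (\<alpha> m j * R (L m j) \<omega>)) - (CLINT \<omega>|Q. iexp (\<beta> j * I \<omega>))) \<le> h m j"
        using j by (simp add: h_def del: of_real_mult)
    qed
    finally show ?thesis .
  qed
  have hbd: "norm (h m j) \<le> 2 * C / 4^j" for m j
  proof (cases "j < m")
    case False then show ?thesis using C0 by (simp add: h_def)
  next
    case True
    have Lp: "0 < L m j" using Lpos[OF True] .
    have int: "integrable Q (\<lambda>\<omega>. \<bar>\<alpha> m j\<bar> * R (L m j) \<omega> + \<bar>\<beta> j\<bar> * I \<omega>)"
      by (intro Bochner_Integration.integrable_add integrable_mult_right ER(1)[OF Lp] EI(1))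
    have h0: "0 \<le> h m j" using True by (simp add: h_def)
    have "h m j \<le> (\<integral>\<omega>. \<bar>\<alpha> m j\<bar> * R (L m j) \<omega> + \<bar>\<beta> j\<bar> * I \<omega> \<partial>Q)"
      unfolding h_def using True
    proof (simp only: if_True, intro integral_mono int)
      show "integrable Q (\<lambda>\<omega>. cmod (iexp (\<alpha> m j * R (L m j) \<omega>) - iexp (\<beta> j * I \<omega>)))"
        by (rule int_diffQ) (intro borel_measurable_times borel_measurable_const Rm Im)+
      fix \<omega> assume w: "\<omega> \<in> space Q"
      have "cmod (iexp (\<alpha> m j * R (L m j) \<omega>) - iexp (\<beta> j * I \<omega>)) \<le> \<bar>\<alpha> m j * R (L m j) \<omega> - \<beta> j * I \<omega>\<bar>"
        by (rule cmod_iexp_diff)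
      also have "\<dots> \<le> \<bar>\<alpha> m j\<bar> * R (L m j) \<omega> + \<bar>\<beta> j\<bar> * I \<omega>"
        using R_nonneg[of "L m j" \<omega>] I_nonneg[OF w] by (simp add: abs_mult abs_triangle_ineq4 order_trans[OF abs_triangle_ineq4])
      finally show "cmod (iexp (\<alpha> m j * R (L m j) \<omega>) - iexp (\<beta> j * I \<omega>)) \<le> \<bar>\<alpha> m j\<bar> * R (L m j) \<omega> + \<bar>\<beta> j\<bar> * I \<omega>" .
    qed
    also have "\<dots> = \<bar>\<alpha> m j\<bar> * (\<integral>\<omega>. R (L m j) \<omega> \<partial>Q) + \<bar>\<beta> j\<bar> * (\<integral>\<omega>. I \<omega> \<partial>Q)"
      by (simp add: Bochner_Integration.integral_add integrable_mult_right ER(1)[OF Lp] EI(1))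
    also have "\<dots> \<le> C / 4^j * 1 + C / 4^j * 1"
      by (intro add_mono mult_mono \<alpha>bd[OF True] \<beta>bd ER_le[OF Lp] EI(2)) (auto intro!: integral_nonneg_AE R_nonneg I_nonneg simp: C0)
    finally show ?thesis using h0 by simp
  qed
  have hlim: "(\<lambda>m. h m j) \<longlonglongrightarrow> 0" for j
  proof -
    have ev: "eventually (\<lambda>m. h m j = (\<integral>\<omega>. cmod (iexp (\<alpha> m j * R (L m j) \<omega>) - iexp (\<beta> j * I \<omega>)) \<partial>Q)) sequentially"
      by (rule eventually_sequentiallyI[of "Suc j"]) (simp add: h_def)
    have "(\<lambda>m. \<integral>\<omega>. cmod (iexp (\<alpha> m j * R (L m j) \<omega>) - iexp (\<beta> j * I \<omega>)) \<partial>Q) \<longlonglongrightarrow> (\<integral>\<omega>. 0 \<partial>Q)"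
    proof (rule integral_dominated_convergence[where w="\<lambda>_. 2"])
      show "(\<lambda>\<omega>. 0::real) \<in> borel_measurable Q" by simp
      show "\<And>m. (\<lambda>\<omega>. cmod (iexp (\<alpha> m j * R (L m j) \<omega>) - iexp (\<beta> j * I \<omega>))) \<in> borel_measurable Q"
        by (rule meas_diffQ) (intro borel_measurable_times borel_measurable_const Rm Im)+
      show "integrable Q (\<lambda>_. 2::real)" by simp
      show "\<And>m. AE \<omega> in Q. norm (cmod (iexp (\<alpha> m j * R (L m j) \<omega>) - iexp (\<beta> j * I \<omega>))) \<le> 2"
        by (simp del: of_real_mult add: cmod_iexp_diff_le2)
      show "AE \<omega> in Q. (\<lambda>m. cmod (iexp (\<alpha> m j * R (L m j) \<omega>) - iexp (\<beta> j * I \<omega>))) \<longlonglongrightarrow> 0"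
      proof (rule AE_I2)
        fix \<omega> assume w: "\<omega> \<in> space Q"
        have "(\<lambda>m. R (L m j) \<omega>) \<longlonglongrightarrow> I \<omega>"
          using filterlim_compose[OF R_conv[OF w] Llim] by (simp add: o_def)
        then have "(\<lambda>m. \<alpha> m j * R (L m j) \<omega>) \<longlonglongrightarrow> \<beta> j * I \<omega>"
          by (intro tendsto_mult \<alpha>lim)
        then have "(\<lambda>m. iexp (\<alpha> m j * R (L m j) \<omega>)) \<longlonglongrightarrow> iexp (\<beta> j * I \<omega>)"
          by (rule tendsto_exp[OF tendsto_mult_left[OF tendsto_of_real]])
        then have "(\<lambda>m. iexp (\<alpha> m j * R (L m j) \<omega>) - iexp (\<beta> j * I \<omega>)) \<longlonglongrightarrow> 0"
          by (rule Lim_null[THEN iffD1])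
        then show "(\<lambda>m. cmod (iexp (\<alpha> m j * R (L m j) \<omega>) - iexp (\<beta> j * I \<omega>))) \<longlonglongrightarrow> 0"
          by (rule tendsto_norm_zero)
      qed
    qed
    then show ?thesis using ev by (simp add: tendsto_cong)
  qed
  have summ: "summable (\<lambda>j. 2 * C / 4^j)"
  proof -
    have "summable (\<lambda>j. (1/4::real)^j)" by (rule summable_geometric) simp
    then have "summable (\<lambda>j. (2 * C) * (1/4::real)^j)" by (rule summable_mult)
    then show ?thesis by (simp add: power_divide)
  qed
  have tan: "(\<lambda>m. suminf (\<lambda>j. h m j)) \<longlonglongrightarrow> suminf (\<lambda>j. 0::real)"
    using tannerys_theorem[where a="\<lambda>j m. h m j" and b="\<lambda>_. 0" and M="\<lambda>j. 2 * C / 4^j" and F=sequentially]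
      hlim hbd summ by (simp add: always_eventually)
  have fin: "suminf (\<lambda>j. h m j) = (\<Sum>j<m. h m j)" for m
    by (rule suminf_finite[of "{..<m}"]) (auto simp: h_def)
  have "(\<lambda>m. \<Sum>j<m. h m j) \<longlonglongrightarrow> 0" using tan fin by simp
  then show ?thesis
    by (rule tendsto_norm_zero_cancel[OF Lim_null_comparison[rotated]]) (simp del: of_real_mult add: stepa)
qed

end

lemma Sblk_law:
  assumes XS: "xs M X a" and BMQ: "bm Q B"
  shows "distr M borel (xs.Sblk X p) = distr Q borel (\<lambda>\<omega>. (real (2^p))\<^sup>2 * bm.R B (2^p) \<omega>)"
proof -
  interpret xs M X a by (rule XS)
  interpret Q: bm Q B by (rule BMQ)
  define L :: nat where "L = 2^p"
  have L: "0 < L" by (simp add: L_def)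
  have iZ: "prob_space.indep_vars M (\<lambda>_. borel) (\<lambda>j. X (L + j)) {..<L}"
  proof -
    have "(\<lambda>j. L + j) ` {..<L} \<subseteq> {1..}" using L by auto
    then show ?thesis using indep_vars_reindex[OF X_indep, of "\<lambda>j. L + j" "{..<L}"] by (auto simp: inj_on_def)
  qed
  have "distr M borel (\<lambda>\<omega>. gsum L (\<lambda>j\<in>{..<L}. X (L + j) \<omega>)) = distr Q borel (\<lambda>\<omega>. gsum L (\<lambda>j\<in>{..<L}. Q.D L j \<omega>))"
  proof (rule same_law[OF Mp Q.Qp _ _ iZ Q.D_indep[OF L]])
    show "finite {..<L}" "{..<L} \<noteq> {}" using L by auto
    show "\<And>j. j \<in> {..<L} \<Longrightarrow> distr M borel (X (L + j)) = std_normal_measure"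
      using L by (intro Xlaw) (simp add: L_def)
    show "\<And>j. j \<in> {..<L} \<Longrightarrow> distr Q borel (Q.D L j) = std_normal_measure"
      by (rule Q.D_law[OF L])
    show "gsum L \<in> borel_measurable (PiM {..<L} (\<lambda>_. borel))" by (rule gsum_meas)
  qed
  also have "\<dots> = distr Q borel (\<lambda>\<omega>. (real L)\<^sup>2 * Q.R L \<omega>)"
    by (intro distr_cong refl) (simp add: gsum_restrict Q.gsum_D[OF _ L])
  finally show ?thesis unfolding Sblk_def[abs_def] L_def gsum_restrict by simp
qed

lemma Sblk_char:
  assumes XS: "xs M X a" and BMQ: "bm Q B"
  shows "char (distr M borel (xs.Sblk X p)) s = (CLINT \<omega>|Q. iexp (s * ((real (2^p))\<^sup>2 * bm.R B (2^p) \<omega>)))"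
proof -
  interpret Q: bm Q B by (rule BMQ)
  show ?thesis unfolding Sblk_law[OF XS BMQ]
    by (rule char_distr_integral) (intro borel_measurable_times borel_measurable_const Q.R_meas)
qed

lemma (in xs) Xsq_char: "1 \<le> i \<Longrightarrow> char (distr M borel (\<lambda>\<omega>. (X i \<omega>)\<^sup>2)) s = char (distr std_normal_measure borel (\<lambda>x. x\<^sup>2)) s"
proof -
  assume i: "1 \<le> i"
  have "distr M borel (\<lambda>\<omega>. (X i \<omega>)\<^sup>2) = distr (distr M borel (X i)) borel (\<lambda>x. x\<^sup>2)"
    using distr_distr[of "\<lambda>x::real. x\<^sup>2" borel borel "X i" M] Xmeas[OF i] by (simp add: comp_def)
  then show ?thesis using Xlaw[OF i] by simp
qed

lemma real_distribution_std_normal_sq: "real_distribution (distr std_normal_measure borel (\<lambda>x. x\<^sup>2))"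
proof -
  have "prob_space std_normal_measure"
    unfolding std_normal_measure_def using prob_space_normal_density by simp
  then interpret prob_space std_normal_measure .
  have S: "sets std_normal_measure = sets borel" by (simp add: std_normal_measure_def)
  have "(\<lambda>x::real. x\<^sup>2) \<in> borel_measurable std_normal_measure"
    unfolding measurable_cong_sets[OF S refl] by simp
  then show ?thesis by (intro real_distribution_distr)
qed

lemma (in xs) em_conv:
  assumes c: "c \<longlonglongrightarrow> 0"
  shows "(\<lambda>m. char (distr M borel (\<lambda>\<omega>. (X (2^m) \<omega>)\<^sup>2)) (c m)) \<longlonglongrightarrow> 1"
proof -
  interpret N: real_distribution "distr std_normal_measure borel (\<lambda>x. x\<^sup>2)"
    by (rule real_distribution_std_normal_sq)
  have "(\<lambda>m. char (distr std_normal_measure borel (\<lambda>x. x\<^sup>2)) (c m)) \<longlonglongrightarrow> char (distr std_normal_measure borel (\<lambda>x. x\<^sup>2)) 0"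
    by (rule isCont_tendsto_compose[OF N.isCont_char c])
  then show ?thesis using Xsq_char[of "2^_"] by (simp add: N.char_zero)
qed

lemma limit_char:
  fixes P :: "'c measure" and \<xi> :: "nat \<Rightarrow> 'c \<Rightarrow> real"
  assumes BMQ: "bm Q B" and Pp: "prob_space P"
    and xi_indep: "prob_space.indep_vars P (\<lambda>_. borel) \<xi> UNIV"
    and xi_law: "\<And>j. distr P borel (\<xi> j) = distr Q borel (\<lambda>\<omega>. LBINT t=0..1. (B t \<omega>)\<^sup>2)"
  shows "(\<lambda>\<omega>. 3 / 2 * (\<Sum>j. \<xi> j \<omega> / 4 ^ j)) \<in> borel_measurable P"
    and "(\<lambda>J. \<Prod>j<J. CLINT \<omega>|Q. iexp ((t * (3 / 2 / 4^j)) * bm.I B \<omega>))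
       \<longlonglongrightarrow> char (distr P borel (\<lambda>\<omega>. 3 / 2 * (\<Sum>j. \<xi> j \<omega> / 4 ^ j))) t"
proof -
  interpret Q: bm Q B by (rule BMQ)
  interpret P: prob_space P by (rule Pp)
  have law: "distr P borel (\<xi> j) = distr Q borel Q.I" for j
    unfolding xi_law Q.I_def[abs_def] ..
  have xm[measurable]: "\<xi> j \<in> borel_measurable P" for j
    using P.indep_vars_def2[THEN iffD1, OF xi_indep] by simp
  show Ym: "(\<lambda>\<omega>. 3 / 2 * (\<Sum>j. \<xi> j \<omega> / 4 ^ j)) \<in> borel_measurable P" by measurable
  have Im[measurable]: "Q.I \<in> borel_measurable Q" by (rule Q.I_meas)
  have nonneg: "AE \<omega> in P. 0 \<le> \<xi> j \<omega>" for j
  proof -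
    have "AE x in distr Q borel Q.I. 0 \<le> x"
      by (subst AE_distr_iff) (auto intro!: AE_I2 Q.I_nonneg)
    then have "AE x in distr P borel (\<xi> j). 0 \<le> x" unfolding law .
    then show ?thesis by (subst (asm) AE_distr_iff) auto
  qed
  have nnb: "(\<integral>\<^sup>+\<omega>. ennreal (\<xi> j \<omega> / 4^j) \<partial>P) \<le> ennreal ((1/4)^j)" for j
  proof -
    have "(\<integral>\<^sup>+\<omega>. ennreal (\<xi> j \<omega> / 4^j) \<partial>P) = (\<integral>\<^sup>+x. ennreal (x / 4^j) \<partial>distr P borel (\<xi> j))"
      by (subst nn_integral_distr) auto
    also have "\<dots> = (\<integral>\<^sup>+x. ennreal (x / 4^j) \<partial>distr Q borel Q.I)" unfolding law ..
    also have "\<dots> = (\<integral>\<^sup>+\<omega>. ennreal (Q.I \<omega> / 4^j) \<partial>Q)"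
      by (subst nn_integral_distr) auto
    also have "\<dots> = ennreal (\<integral>\<omega>. Q.I \<omega> / 4^j \<partial>Q)"
      by (rule nn_integral_eq_integral) (auto intro!: AE_I2 divide_nonneg_nonneg Q.I_nonneg integrable_divide Q.EI(1))
    also have "\<dots> \<le> ennreal ((1/4)^j)"
    proof -
      have "(\<integral>\<omega>. Q.I \<omega> / 4^j \<partial>Q) = (\<integral>\<omega>. Q.I \<omega> \<partial>Q) / 4^j" by simp
      also have "\<dots> \<le> 1 / 4^j" using Q.EI(2) by (simp add: divide_right_mono)
      finally show ?thesis by (simp add: power_divide)
    qed
    finally show ?thesis .
  qed
  have fin: "(\<integral>\<^sup>+\<omega>. (\<Sum>j. ennreal (\<xi> j \<omega> / 4^j)) \<partial>P) \<noteq> \<infinity>"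
  proof -
    have "(\<integral>\<^sup>+\<omega>. (\<Sum>j. ennreal (\<xi> j \<omega> / 4^j)) \<partial>P) = (\<Sum>j. \<integral>\<^sup>+\<omega>. ennreal (\<xi> j \<omega> / 4^j) \<partial>P)"
      by (rule nn_integral_suminf) simp
    also have "\<dots> \<le> (\<Sum>j. ennreal ((1/4)^j))"
      by (intro suminf_le nnb) auto
    also have "\<dots> = ennreal (\<Sum>j. (1/4::real)^j)"
      by (rule suminf_ennreal2) (auto intro: summable_geometric)
    finally show ?thesis by (auto simp: top_unique)
  qed
  have summ: "AE \<omega> in P. summable (\<lambda>j. \<xi> j \<omega> / 4^j)"
  proof -
    have "AE \<omega> in P. (\<Sum>j. ennreal (\<xi> j \<omega> / 4^j)) \<noteq> \<infinity>"
      by (rule nn_integral_PInf_AE[OF _ fin]) simp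
    moreover have "AE \<omega> in P. \<forall>j. 0 \<le> \<xi> j \<omega>"
      using nonneg by (simp add: AE_all_countable)
    ultimately show ?thesis
    proof eventually_elim
      case (elim \<omega>)
      show ?case by (rule summable_suminf_not_top) (use elim in auto)
    qed
  qed
  define Sn where "Sn J \<omega> = (\<Sum>j\<in>{..<J}. (3 / 2 / 4^j) * \<xi> j \<omega>)" for J \<omega>
  have Snm[measurable]: "Sn J \<in> borel_measurable P" for J unfolding Sn_def by measurable
  have charSn: "char (distr P borel (Sn J)) t = (\<Prod>j<J. CLINT \<omega>|Q. iexp ((t * (3 / 2 / 4^j)) * Q.I \<omega>))" for J
  proof -
    have ind: "P.indep_vars (\<lambda>_. borel) (\<lambda>j \<omega>. (3 / 2 / 4^j) * \<xi> j \<omega>) {..<J}"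
      using P.indep_vars_compose2[OF P.indep_vars_subset[OF xi_indep, of "{..<J}"], of "\<lambda>j x. (3 / 2 / 4^j) * x" "\<lambda>_. borel"]
      by simp
    have "char (distr P borel (Sn J)) t = (\<Prod>j<J. char (distr P borel (\<lambda>\<omega>. (3 / 2 / 4^j) * \<xi> j \<omega>)) t)"
      unfolding Sn_def by (rule P.char_distr_sum[OF ind])
    also have "\<dots> = (\<Prod>j<J. char (distr P borel (\<xi> j)) (t * (3 / 2 / 4^j)))"
      by (intro prod.cong refl char_distr_scale xm)
    also have "\<dots> = (\<Prod>j<J. char (distr Q borel Q.I) (t * (3 / 2 / 4^j)))" unfolding law ..
    also have "\<dots> = (\<Prod>j<J. CLINT \<omega>|Q. iexp ((t * (3 / 2 / 4^j)) * Q.I \<omega>))"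
      by (intro prod.cong refl char_distr_integral Im)
    finally show ?thesis .
  qed
  have "(\<lambda>J. char (distr P borel (Sn J)) t) \<longlonglongrightarrow> char (distr P borel (\<lambda>\<omega>. 3 / 2 * (\<Sum>j. \<xi> j \<omega> / 4 ^ j))) t"
    unfolding char_distr_integral[OF Snm] char_distr_integral[OF Ym]
  proof (rule integral_dominated_convergence[where w="\<lambda>_. 1"])
    show "(\<lambda>\<omega>. iexp (t * (3 / 2 * (\<Sum>j. \<xi> j \<omega> / 4 ^ j)))) \<in> borel_measurable P" by measurable
    show "\<And>J. (\<lambda>\<omega>. iexp (t * Sn J \<omega>)) \<in> borel_measurable P" by measurable
    show "integrable P (\<lambda>_. 1::real)" by simp
    show "\<And>J. AE \<omega> in P. norm (iexp (t * Sn J \<omega>)) \<le> 1"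
      by (simp del: of_real_mult)
    show "AE \<omega> in P. (\<lambda>J. iexp (t * Sn J \<omega>)) \<longlonglongrightarrow> iexp (t * (3 / 2 * (\<Sum>j. \<xi> j \<omega> / 4 ^ j)))"
      using summ
    proof eventually_elim
      case (elim \<omega>)
      have "(\<lambda>J. \<Sum>j<J. \<xi> j \<omega> / 4^j) \<longlonglongrightarrow> (\<Sum>j. \<xi> j \<omega> / 4 ^ j)"
        by (rule summable_LIMSEQ[OF elim])
      then have "(\<lambda>J. 3 / 2 * (\<Sum>j<J. \<xi> j \<omega> / 4^j)) \<longlonglongrightarrow> 3 / 2 * (\<Sum>j. \<xi> j \<omega> / 4 ^ j)"
        by (intro tendsto_mult_left)
      moreover have "(\<lambda>J. 3 / 2 * (\<Sum>j<J. \<xi> j \<omega> / 4^j)) = (\<lambda>J. Sn J \<omega>)"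
        unfolding Sn_def by (intro ext) (simp add: sum_distrib_left)
      ultimately have "(\<lambda>J. Sn J \<omega>) \<longlonglongrightarrow> 3 / 2 * (\<Sum>j. \<xi> j \<omega> / 4 ^ j)" by simp
      then have "(\<lambda>J. t * Sn J \<omega>) \<longlonglongrightarrow> t * (3 / 2 * (\<Sum>j. \<xi> j \<omega> / 4 ^ j))"
        by (rule tendsto_mult_left)
      then show ?case by (rule tendsto_exp[OF tendsto_mult_left[OF tendsto_of_real]])
    qed
  qed
  then show "(\<lambda>J. \<Prod>j<J. CLINT \<omega>|Q. iexp ((t * (3 / 2 / 4^j)) * Q.I \<omega>))
       \<longlonglongrightarrow> char (distr P borel (\<lambda>\<omega>. 3 / 2 * (\<Sum>j. \<xi> j \<omega> / 4 ^ j))) t"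
    unfolding charSn .
qed

lemma pow_split_sq:
  assumes "j < m"
  shows "(real (2^(m - Suc j)))\<^sup>2 = (2^m)\<^sup>2 / (4 * 4^j)"
proof -
  have mm: "m - Suc j + Suc j = m" using assms by simp
  have "(2::real)^(m - Suc j) * 2^(Suc j) = 2^m"
    by (metis power_add mm)
  then have e: "real (2^(m - Suc j)) = 2^m / 2^(Suc j)" by (simp add: field_simps)
  have "(2::real)^(Suc j) * 2^(Suc j) = 4 * 4^j"
    by (simp add: power_mult_distrib[symmetric])
  then show ?thesis unfolding e by (simp add: power2_eq_square)
qed

definition rho :: "nat \<Rightarrow> real" where
  "rho m = 1 / (1 + 3 * (1/2)^m + 2 * (1/4)^m)"

lemma rho_lim: "rho \<longlonglongrightarrow> 1"
proof -
  have "(\<lambda>m. 1 / (1 + 3 * (1/2::real)^m + 2 * (1/4)^m)) \<longlonglongrightarrow> 1 / (1 + 3 * 0 + 2 * 0)"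
    by (intro tendsto_intros LIMSEQ_power_zero) auto
  then show ?thesis unfolding rho_def[abs_def] by simp
qed

lemma rho_bounds: "0 < rho m" "rho m \<le> 1"
proof -
  have a: "0 \<le> (1/2::real)^m" "0 \<le> (1/4::real)^m" by simp_all
  have D: "1 \<le> 1 + 3 * (1/2::real)^m + 2 * (1/4)^m" using a by linarith
  show "0 < rho m" unfolding rho_def by (rule divide_pos_pos) (use D in linarith)+
  have g: "\<And>x::real. 1 \<le> x \<Longrightarrow> 1 / x \<le> 1" by simp
  show "rho m \<le> 1" unfolding rho_def by (rule g[OF D])
qed

lemma vnorm_alt:
  assumes a_def: "\<And>k. a k = 2 ^ (k - 1)"
  shows "real (vnorm a (2^m)) = (2^m)\<^sup>2 / (6 * rho m)"
proof -
  have x: "(2::real)^m > 0" by simp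
  have h4: "(4::real)^m = (2^m)\<^sup>2" by (simp add: power_mult_distrib[symmetric] power2_eq_square)
  have h2: "(1/2::real)^m = 1 / 2^m" by (simp add: power_divide)
  have h4': "(1/4::real)^m = 1 / (2^m)\<^sup>2" using h4 by (simp add: power_divide)
  show ?thesis unfolding vnorm_pow_real[OF a_def] rho_def h4 h2 h4' using x
    by (simp add: field_simps power2_eq_square)
qed

lemma alpha_eq:
  assumes a_def: "\<And>k. a k = 2 ^ (k - 1)" and "j < m"
  shows "t / real (vnorm a (2^m)) * (real (2^(m - Suc j)))\<^sup>2 = t * (3 / 2 / 4^j) * rho m"
  unfolding vnorm_alt[OF a_def] pow_split_sq[OF assms(2)]
  using rho_bounds[of m] by (simp add: field_simps)

lemma inv_vnorm_lim:
  assumes a_def: "\<And>k. a k = 2 ^ (k - 1)"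
  shows "(\<lambda>m. t / real (vnorm a (2^m))) \<longlonglongrightarrow> 0"
proof -
  have e: "t / real (vnorm a (2^m)) = 6 * t * rho m * (1/4)^m" for m
  proof -
    have h4: "(4::real)^m = (2^m)\<^sup>2" by (simp add: power_mult_distrib[symmetric] power2_eq_square)
    have h4': "(1/4::real)^m = 1 / (2^m)\<^sup>2" using h4 by (simp add: power_divide)
    have x: "(2::real)^m > 0" by simp
    show ?thesis unfolding vnorm_alt[OF a_def] h4' using x rho_bounds(1)[of m]
      by (simp add: field_simps)
  qed
  have "(\<lambda>m. 6 * t * rho m * (1/4::real)^m) \<longlonglongrightarrow> 6 * t * 1 * 0"
    by (intro tendsto_intros rho_lim LIMSEQ_power_zero) auto
  then show ?thesis unfolding e by simp
qed

lemma Llim: "filterlim (\<lambda>m. 2^(m - Suc j) :: nat) at_top sequentially"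
proof (rule filterlim_at_top_mono[OF filterlim_minus_const_nat_at_top[of "Suc j"]])
  show "\<forall>\<^sub>F m in sequentially. m - Suc j \<le> 2 ^ (m - Suc j)"
    by (intro always_eventually allI less_imp_le less_exp)
qed

lemma part2:
  fixes P :: "'c measure" and \<xi> :: "nat \<Rightarrow> 'c \<Rightarrow> real"
  assumes XS: "xs M X a" and BMQ: "bm Q B" and Pp: "prob_space P"
    and xi_indep: "prob_space.indep_vars P (\<lambda>_. borel) \<xi> UNIV"
    and xi_law: "\<And>j. distr P borel (\<xi> j) = distr Q borel (\<lambda>\<omega>. LBINT t=0..1. (B t \<omega>)\<^sup>2)"
  shows "weak_conv_m (\<lambda>m. distr M borel (\<lambda>\<omega>. Vstat a X (2 ^ m) \<omega> / real (vnorm a (2 ^ m))))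
        (distr P borel (\<lambda>\<omega>. 3 / 2 * (\<Sum>j. \<xi> j \<omega> / 4 ^ j)))"
proof (rule levy_continuity)
  interpret xs M X a by (rule XS)
  interpret Q: bm Q B by (rule BMQ)
  interpret P: prob_space P by (rule Pp)
  have Sm: "Sblk p \<in> borel_measurable M" for p
    unfolding Sblk_def[abs_def] gsum_def
    by (intro borel_measurable_sum borel_measurable_power Xmeas) simp
  have Vm: "(\<lambda>\<omega>. Vstat a X (2 ^ m) \<omega> / real (vnorm a (2 ^ m))) \<in> borel_measurable M" for m
    unfolding V_decomp
    by (intro borel_measurable_divide borel_measurable_add borel_measurable_sum borel_measurable_power Xmeas Sm
        borel_measurable_const) simp
  show "real_distribution (distr M borel (\<lambda>\<omega>. Vstat a X (2 ^ m) \<omega> / real (vnorm a (2 ^ m))))" for m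
    by (rule real_distribution_distr[OF Vm])
  show "real_distribution (distr P borel (\<lambda>\<omega>. 3 / 2 * (\<Sum>j. \<xi> j \<omega> / 4 ^ j)))"
    by (rule P.real_distribution_distr[OF limit_char(1)[OF BMQ Pp xi_indep xi_law]])
  fix t :: real
  define v where "v m = real (vnorm a (2 ^ m))" for m
  define \<alpha> where "\<alpha> m j = t / v m * (real (2^(m - Suc j)))\<^sup>2" for m j
  define \<beta> where "\<beta> j = t * (3 / 2 / 4^j)" for j
  define L where "L m j = (2::nat)^(m - Suc j)" for m j
  define A where "A m = (\<Prod>j<m. CLINT \<omega>|Q. iexp (\<alpha> m j * Q.R (L m j) \<omega>))" for m
  define Bp where "Bp m = (\<Prod>j<m. CLINT \<omega>|Q. iexp (\<beta> j * Q.I \<omega>))" for m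
  define e where "e m = char (distr M borel (\<lambda>\<omega>. (X (2^m) \<omega>)\<^sup>2)) (t / v m)" for m
  define \<Phi> where "\<Phi> = char (distr P borel (\<lambda>\<omega>. 3 / 2 * (\<Sum>j. \<xi> j \<omega> / 4 ^ j))) t"
  have charV: "char (distr M borel (\<lambda>\<omega>. Vstat a X (2 ^ m) \<omega> / real (vnorm a (2 ^ m)))) t = A m * e m" for m
  proof -
    have "char (distr M borel (\<lambda>\<omega>. Vstat a X (2 ^ m) \<omega> / v m)) t =
      (\<Prod>p<m. char (distr M borel (Sblk p)) (t / v m)) * e m"
      unfolding e_def by (rule char_V)
    also have "(\<Prod>p<m. char (distr M borel (Sblk p)) (t / v m)) = (\<Prod>p<m. CLINT \<omega>|Q. iexp (t / v m * ((real (2^p))\<^sup>2 * Q.R (2^p) \<omega>)))"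
      by (intro prod.cong refl Sblk_char[OF XS BMQ])
    also have "\<dots> = (\<Prod>j<m. CLINT \<omega>|Q. iexp (t / v m * ((real (2^(m - Suc j)))\<^sup>2 * Q.R (2^(m - Suc j)) \<omega>)))"
      by (rule prod.reindex_bij_witness[of _ "\<lambda>p. m - Suc p" "\<lambda>j. m - Suc j"]) auto
    also have "\<dots> = A m"
      unfolding A_def \<alpha>_def L_def by (simp add: mult.assoc)
    finally show ?thesis unfolding v_def .
  qed
  have AB: "(\<lambda>m. A m - Bp m) \<longlonglongrightarrow> 0"
    unfolding A_def Bp_def
  proof (rule Q.main_conv[where C="3 / 2 * \<bar>t\<bar>"])
    fix j
    have ev: "eventually (\<lambda>m. \<beta> j * rho m = \<alpha> m j) sequentially"
    proof (rule eventually_sequentiallyI[of "Suc j"])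
      fix m assume "Suc j \<le> m" then have jm: "j < m" by simp
      show "\<beta> j * rho m = \<alpha> m j" unfolding \<alpha>_def \<beta>_def v_def by (rule alpha_eq[OF xs.a_def[OF XS] jm, symmetric])
    qed
    have "(\<lambda>m. \<beta> j * rho m) \<longlonglongrightarrow> \<beta> j * 1" by (intro tendsto_intros rho_lim)
    then have "(\<lambda>m. \<beta> j * rho m) \<longlonglongrightarrow> \<beta> j" by simp
    then show "(\<lambda>m. \<alpha> m j) \<longlonglongrightarrow> \<beta> j" using ev by (rule Lim_transform_eventually)
    show "\<bar>\<beta> j\<bar> \<le> 3 / 2 * \<bar>t\<bar> / 4^j" by (simp add: \<beta>_def abs_mult)
    show "filterlim (\<lambda>m. L m j) at_top sequentially" unfolding L_def by (rule Llim)
  next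
    fix m j :: nat assume j: "j < m"
    have "\<alpha> m j = \<beta> j * rho m" unfolding \<alpha>_def \<beta>_def v_def by (rule alpha_eq[OF xs.a_def[OF XS] j])
    then have "\<bar>\<alpha> m j\<bar> = \<bar>\<beta> j\<bar> * rho m" using rho_bounds[of m] by (simp add: abs_mult)
    also have "\<dots> \<le> \<bar>\<beta> j\<bar> * 1" using rho_bounds[of m] by (intro mult_left_mono) auto
    finally show "\<bar>\<alpha> m j\<bar> \<le> 3 / 2 * \<bar>t\<bar> / 4^j" by (simp add: \<beta>_def abs_mult)
    show "0 < L m j" by (simp add: L_def)
  qed
  have Bl: "Bp \<longlonglongrightarrow> \<Phi>"
    unfolding Bp_def \<Phi>_def \<beta>_def by (rule limit_char(2)[OF BMQ Pp xi_indep xi_law])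
  have el: "e \<longlonglongrightarrow> 1"
    unfolding e_def v_def by (rule em_conv[OF inv_vnorm_lim[OF a_def]])
  have "(\<lambda>m. ((A m - Bp m) + Bp m) * e m) \<longlonglongrightarrow> (0 + \<Phi>) * 1"
    by (intro tendsto_intros AB Bl el)
  then show "(\<lambda>m. char (distr M borel (\<lambda>\<omega>. Vstat a X (2 ^ m) \<omega> / real (vnorm a (2 ^ m)))) t)
      \<longlonglongrightarrow> char (distr P borel (\<lambda>\<omega>. 3 / 2 * (\<Sum>j. \<xi> j \<omega> / 4 ^ j))) t"
    unfolding charV \<Phi>_def by simp
qed

lemma std_normal_prob: "prob_space std_normal_measure"
  unfolding std_normal_measure_def using prob_space_normal_density by simp

lemma std_normal_pos:
  assumes ab: "a < b" "-4 \<le> a" "b \<le> 4"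
  shows "0 < measure std_normal_measure {a..b}"
proof -
  interpret S: prob_space std_normal_measure by (rule std_normal_prob)
  define K where "K = exp (- 8) / sqrt (2 * pi)"
  have K: "0 < K" unfolding K_def by simp
  have bnd: "K \<le> std_normal_density x" if "x \<in> {a..b}" for x
  proof -
    have "x\<^sup>2 \<le> 16"
    proof -
      have "\<bar>x\<bar> \<le> 4" using that ab by auto
      then have "\<bar>x\<bar>\<^sup>2 \<le> 4\<^sup>2" by (intro power_mono) auto
      then show ?thesis by simp
    qed
    then have "exp (- 8) \<le> exp (- x\<^sup>2 / 2)" by simp
    then show ?thesis unfolding K_def std_normal_density_def by (simp add: divide_right_mono)
  qed
  have "ennreal K * ennreal (b - a) = (\<integral>\<^sup>+x. ennreal K * indicator {a..b} x \<partial>lborel)"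
  proof -
    have e1: "(\<integral>\<^sup>+x. ennreal K * indicator {a..b} x \<partial>lborel) = ennreal K * emeasure lborel {a..b}"
      by (rule nn_integral_cmult_indicator) simp
    have e2: "emeasure lborel {a..b} = ennreal (b - a)"
      by (rule emeasure_lborel_Icc) (use ab(1) in linarith)
    show ?thesis unfolding e1 e2 by (rule refl)
  qed
  also have "\<dots> \<le> (\<integral>\<^sup>+x. ennreal (std_normal_density x) * indicator {a..b} x \<partial>lborel)"
  proof (rule nn_integral_mono)
    fix x
    show "ennreal K * indicator {a..b} x \<le> ennreal (std_normal_density x) * indicator {a..b} x"
    proof (cases "x \<in> {a..b}")
      case True then show ?thesis using bnd[OF True] by (simp add: ennreal_leI)
    next
      case False then show ?thesis by simp
    qed
  qed
  also have "\<dots> = emeasure std_normal_measure {a..b}"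
    unfolding std_normal_measure_def by (subst emeasure_density) auto
  finally have "ennreal K * ennreal (b - a) \<le> emeasure std_normal_measure {a..b}" .
  moreover have "0 < ennreal K * ennreal (b - a)"
  proof -
    have "ennreal K * ennreal (b - a) = ennreal (K * (b - a))" using K ab by (simp add: ennreal_mult)
    moreover have "0 < K * (b - a)" using K ab by simp
    ultimately show ?thesis by simp
  qed
  ultimately have "0 < emeasure std_normal_measure {a..b}" by (rule less_le_trans[rotated])
  then show ?thesis by (simp add: S.emeasure_eq_measure)
qed

context xs
begin

lemma tseq_ge1: "1 \<le> i \<Longrightarrow> 1 \<le> tseq a i"
proof -
  assume "1 \<le> i"
  then obtain p where "2^p \<le> i" "i < 2^(p+1)" using ex_power_ivl1[of 2 i] by auto
  then have "tseq a i = 2^p" using tseq_blk[OF a_def, of p i] by simp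
  then show ?thesis by simp
qed

lemma Vstat_meas: "Vstat a X n \<in> borel_measurable M"
  unfolding Vstat_def[abs_def] Wsum_def
proof (intro borel_measurable_sum borel_measurable_power)
  fix i j assume i: "i \<in> {1..n}" and j: "j \<in> {tseq a i..i}"
  then have "1 \<le> j" using tseq_ge1[of i] by auto
  then show "X j \<in> borel_measurable M" by (rule Xmeas)
qed

lemma vnorm_4H: "real (vnorm a (4 * 2^q - 1)) = (16 * (2^q)\<^sup>2 + 12 * 2^q - 4) / 6"
proof -
  have e: "4 * 2^q = Suc (4 * 2^q - 1)" by simp
  have "vnorm a (4 * 2^q) = vnorm a (4 * 2^q - 1) + lseq a (4 * 2^q)"
    by (metis e vnorm_Suc)
  moreover have "lseq a (4 * 2^q) = 1"
    using lseq_blk[OF a_def, of "Suc (Suc q)" "4 * 2^q"] by simp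
  moreover have "real (vnorm a (4 * 2^q)) = (16 * (2^q)\<^sup>2 + 12 * 2^q + 2) / 6"
  proof -
    have "(4::nat) * 2^q = 2^(Suc (Suc q))" by simp
    then have "real (vnorm a (4 * 2^q)) = (4^(Suc (Suc q)) + 3 * 2^(Suc (Suc q)) + 2) / 6"
      using vnorm_pow_real[OF a_def, of "Suc (Suc q)"] by simp
    also have "(4::real)^(Suc (Suc q)) = 16 * (2^q)\<^sup>2"
      by (simp add: power_mult_distrib[symmetric] power2_eq_square)
    finally show ?thesis by simp
  qed
  ultimately show ?thesis by simp
qed

definition Tq :: "nat \<Rightarrow> 'a \<Rightarrow> real" where
  "Tq q \<omega> = (\<Sum>j\<in>{2 * 2^q..<3 * 2^q}. X j \<omega>)"

definition Gq :: "nat \<Rightarrow> 'a \<Rightarrow> real" where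
  "Gq q \<omega> = (\<Sum>i\<in>{3 * 2^q..<4 * 2^q}. \<Sum>j\<in>{3 * 2^q..i}. X j \<omega>)"

lemma V_lower: "real (2^q) * (Tq q \<omega>)\<^sup>2 + 2 * Tq q \<omega> * Gq q \<omega> \<le> Vstat a X (4 * 2^q - 1) \<omega>"
proof -
  define H :: nat where "H = 2^q"
  have H1: "1 \<le> H" by (simp add: H_def)
  have W: "Wsum a X i \<omega> = Tq q \<omega> + (\<Sum>j\<in>{3 * H..i}. X j \<omega>)" if i: "i \<in> {3*H..<4*H}" for i
  proof -
    have "Wsum a X i \<omega> = (\<Sum>j=2^(Suc q)..i. X j \<omega>)"
      by (rule Wsum_blk) (use i in \<open>auto simp: H_def\<close>)
    also have "\<dots> = (\<Sum>j\<in>{2*H..<Suc i}. X j \<omega>)"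
      by (simp add: H_def atLeastLessThanSuc_atLeastAtMost)
    also have "\<dots> = (\<Sum>j\<in>{2*H..<3*H}. X j \<omega>) + (\<Sum>j\<in>{3*H..<Suc i}. X j \<omega>)"
      by (rule sum.atLeastLessThan_concat[symmetric]) (use i in auto)
    finally show ?thesis by (simp add: Tq_def H_def atLeastLessThanSuc_atLeastAtMost)
  qed
  have "real H * (Tq q \<omega>)\<^sup>2 + 2 * Tq q \<omega> * Gq q \<omega> =
      (\<Sum>i\<in>{3*H..<4*H}. (Tq q \<omega>)\<^sup>2 + 2 * Tq q \<omega> * (\<Sum>j\<in>{3 * H..i}. X j \<omega>))"
    by (simp add: sum.distrib Gq_def H_def sum_distrib_left)
  also have "\<dots> \<le> (\<Sum>i\<in>{3*H..<4*H}. (Wsum a X i \<omega>)\<^sup>2)"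
  proof (rule sum_mono)
    fix i assume i: "i \<in> {3*H..<4*H}"
    have "(Tq q \<omega>)\<^sup>2 + 2 * Tq q \<omega> * (\<Sum>j\<in>{3 * H..i}. X j \<omega>) \<le> (Tq q \<omega> + (\<Sum>j\<in>{3 * H..i}. X j \<omega>))\<^sup>2"
      by (simp add: power2_eq_square algebra_simps)
    then show "(Tq q \<omega>)\<^sup>2 + 2 * Tq q \<omega> * (\<Sum>j\<in>{3 * H..i}. X j \<omega>) \<le> (Wsum a X i \<omega>)\<^sup>2"
      using W[OF i] by simp
  qed
  also have "\<dots> \<le> (\<Sum>i\<in>{1..4*H - 1}. (Wsum a X i \<omega>)\<^sup>2)"
    by (rule sum_mono2) (use H1 in auto)
  finally show ?thesis unfolding Vstat_def H_def .
qed

end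

context xs
begin

lemma Tq_meas: "Tq q \<in> borel_measurable M"
  unfolding Tq_def[abs_def]
proof (intro borel_measurable_sum)
  fix j :: nat assume "j \<in> {2 * 2^q..<3 * (2::nat)^q}"
  then have "1 \<le> j" using one_le_power[of "2::nat" q] by auto
  then show "X j \<in> borel_measurable M" by (rule Xmeas)
qed

lemma Gq_meas: "Gq q \<in> borel_measurable M"
  unfolding Gq_def[abs_def]
proof (intro borel_measurable_sum)
  fix i j :: nat assume "j \<in> {3 * 2^q..i}"
  then have h: "3 * 2^q \<le> j" by simp
  have "(1::nat) \<le> 3 * 2^q" by (simp add: Suc_leI)
  with h have "(1::nat) \<le> j" by linarith
  then show "X j \<in> borel_measurable M" by (rule Xmeas)
qed

lemma T_normal: "distributed M lborel (\<lambda>\<omega>. Tq q \<omega> / sqrt (real (2^q))) std_normal_density"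
proof -
  define A where "A = {2 * 2^q..<3 * (2::nat)^q}"
  have A1: "A \<subseteq> {1..}" unfolding A_def using one_le_power[of 2 q] by auto
  have cardA: "card A = 2^q" unfolding A_def by simp
  have "distributed M lborel (\<lambda>x. \<Sum>i\<in>A. X i x) (normal_density (\<Sum>i\<in>A. 0) (sqrt (\<Sum>i\<in>A. 1\<^sup>2)))"
  proof (rule sum_indep_normal)
    show "finite A" "A \<noteq> {}" unfolding A_def by auto
    show "indep_vars (\<lambda>i. borel) X A" by (rule indep_vars_subset[OF X_indep A1])
    show "\<And>i. i \<in> A \<Longrightarrow> distributed M lborel (X i) (normal_density 0 1)"
      using A1 X_normal by auto
  qed simp
  then have D: "distributed M lborel (Tq q) (normal_density 0 (sqrt (real (2^q))))"
    unfolding Tq_def[abs_def] A_def[symmetric] using cardA by simp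
  have pos: "0 < sqrt (real (2^q))" by simp
  show ?thesis using normal_standard_normal_convert[OF pos, of "Tq q" 0] D by simp
qed

lemma N_prob:
  assumes S: "S \<in> sets borel"
  shows "prob {\<omega> \<in> space M. Tq q \<omega> / sqrt (real (2^q)) \<in> S} = measure std_normal_measure S"
proof -
  let ?N = "\<lambda>\<omega>. Tq q \<omega> / sqrt (real (2^q))"
  have Nm: "?N \<in> measurable M lborel" using distributed_measurable[OF T_normal] .
  have "measure (distr M lborel ?N) S = prob (?N -` S \<inter> space M)"
    by (rule measure_distr[OF Nm]) (use S in simp)
  moreover have "distr M lborel ?N = std_normal_measure"
    using distributed_distr_eq_density[OF T_normal] unfolding std_normal_measure_def .
  moreover have "?N -` S \<inter> space M = {\<omega> \<in> space M. ?N \<omega> \<in> S}" by auto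
  ultimately show ?thesis by simp
qed

lemma NG_indep: "indep_var borel (\<lambda>\<omega>. Tq q \<omega> / sqrt (real (2^q))) borel (Gq q)"
proof -
  define A where "A = {2 * 2^q..<3 * (2::nat)^q}"
  define C where "C = {3 * 2^q..<4 * (2::nat)^q}"
  have A1: "A \<subseteq> {1..}" unfolding A_def using one_le_power[of 2 q] by auto
  have C1: "C \<subseteq> {1..}" unfolding C_def using one_le_power[of 2 q] by auto
  have AC: "A \<inter> C = {}" unfolding A_def C_def by auto
  have ind: "indep_var (PiM A (\<lambda>_. borel)) (\<lambda>\<omega>. restrict (\<lambda>i. X i \<omega>) A) (PiM C (\<lambda>_. borel)) (\<lambda>\<omega>. restrict (\<lambda>i. X i \<omega>) C)"
    by (rule indep_var_restrict[OF X_indep AC A1 C1])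
  define Y1 where "Y1 y = (\<Sum>j\<in>A. y j) / sqrt (real (2^q))" for y :: "nat \<Rightarrow> real"
  define Y2 where "Y2 y = (\<Sum>i\<in>C. \<Sum>j\<in>{3 * 2^q..i}. y j)" for y :: "nat \<Rightarrow> real"
  have m1: "Y1 \<in> borel_measurable (PiM A (\<lambda>_. borel))"
    unfolding Y1_def[abs_def]
    by (intro borel_measurable_divide borel_measurable_sum measurable_component_singleton borel_measurable_const) auto
  have m2: "Y2 \<in> borel_measurable (PiM C (\<lambda>_. borel))"
    unfolding Y2_def[abs_def]
  proof (intro borel_measurable_sum)
    fix i j assume "i \<in> C" "j \<in> {3 * 2^q..i}"
    then have "j \<in> C" unfolding C_def by auto
    then show "(\<lambda>x. x j) \<in> borel_measurable (PiM C (\<lambda>_. borel))" by (rule measurable_component_singleton)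
  qed
  have "indep_var borel (Y1 \<circ> (\<lambda>\<omega>. restrict (\<lambda>i. X i \<omega>) A)) borel (Y2 \<circ> (\<lambda>\<omega>. restrict (\<lambda>i. X i \<omega>) C))"
    by (rule indep_var_compose[OF ind m1 m2])
  moreover have "Y1 \<circ> (\<lambda>\<omega>. restrict (\<lambda>i. X i \<omega>) A) = (\<lambda>\<omega>. Tq q \<omega> / sqrt (real (2^q)))"
    unfolding Y1_def Tq_def A_def[symmetric] by (auto intro!: ext sum.cong)
  moreover have "Y2 \<circ> (\<lambda>\<omega>. restrict (\<lambda>i. X i \<omega>) C) = Gq q"
    unfolding Y2_def Gq_def C_def[symmetric]
  proof (rule ext)
    fix \<omega>
    have "(\<Sum>i\<in>C. \<Sum>j\<in>{3 * 2^q..i}. restrict (\<lambda>i. X i \<omega>) C j) = (\<Sum>i\<in>C. \<Sum>j\<in>{3 * 2^q..i}. X j \<omega>)"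
      by (intro sum.cong refl) (auto simp: C_def)
    then show "((\<lambda>y. \<Sum>i\<in>C. \<Sum>j\<in>{3 * 2^q..i}. y j) \<circ> (\<lambda>\<omega>. restrict (\<lambda>i. X i \<omega>) C)) \<omega> = (\<Sum>i\<in>C. \<Sum>j\<in>{3 * 2^q..i}. X j \<omega>)"
      by simp
  qed
  ultimately show ?thesis by simp
qed

end

context xs
begin

lemma key_bound:
  "min (measure std_normal_measure {3..4}) (measure std_normal_measure {-4..-3})
    \<le> prob {\<omega> \<in> space M. \<bar>Vstat a X (4 * 2^q - 1) \<omega> / real (vnorm a (4 * 2^q - 1)) - 1\<bar> > 1}"
proof -
  interpret S: prob_space std_normal_measure by (rule std_normal_prob)
  have setsS: "sets std_normal_measure = sets borel" by (simp add: std_normal_measure_def)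
  define N where "N \<omega> = Tq q \<omega> / sqrt (real (2^q))" for \<omega>
  define G where "G = Gq q"
  define c where "c = min (measure std_normal_measure {3..4}) (measure std_normal_measure {-4..-3})"
  have Nm[measurable]: "N \<in> borel_measurable M" unfolding N_def[abs_def]
    by (intro borel_measurable_divide Tq_meas borel_measurable_const)
  have Gm[measurable]: "G \<in> borel_measurable M" unfolding G_def by (rule Gq_meas)
  have ind: "indep_var borel N borel G" unfolding N_def[abs_def] G_def by (rule NG_indep)
  define E1 where "E1 = {\<omega> \<in> space M. 3 \<le> N \<omega> \<and> 0 \<le> G \<omega>}"
  define E2 where "E2 = {\<omega> \<in> space M. N \<omega> \<le> -3 \<and> G \<omega> \<le> 0}"
  define S where "S = {\<omega> \<in> space M. \<bar>Vstat a X (4 * 2^q - 1) \<omega> / real (vnorm a (4 * 2^q - 1)) - 1\<bar> > 1}"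
  have E1m: "E1 \<in> events" unfolding E1_def by measurable
  have E2m: "E2 \<in> events" unfolding E2_def by measurable
  have Vm[measurable]: "Vstat a X (4 * 2^q - 1) \<in> borel_measurable M" by (rule Vstat_meas)
  have Sm: "S \<in> events" unfolding S_def by measurable
  have pN1: "c \<le> prob {\<omega> \<in> space M. 3 \<le> N \<omega>}"
  proof -
    have "prob {\<omega> \<in> space M. 3 \<le> N \<omega>} = measure std_normal_measure {3..}"
      using N_prob[of "{3..}" q] unfolding N_def by simp
    moreover have "measure std_normal_measure {3..4} \<le> measure std_normal_measure {3..}"
      by (rule S.finite_measure_mono) (auto simp: setsS)
    ultimately show ?thesis unfolding c_def by linarith
  qed
  have pN2: "c \<le> prob {\<omega> \<in> space M. N \<omega> \<le> -3}"
  proof -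
    have "prob {\<omega> \<in> space M. N \<omega> \<le> -3} = measure std_normal_measure {..-3}"
      using N_prob[of "{..-3}" q] unfolding N_def by simp
    moreover have "measure std_normal_measure {-4..-3} \<le> measure std_normal_measure {..-3}"
      by (rule S.finite_measure_mono) (auto simp: setsS)
    ultimately show ?thesis unfolding c_def by linarith
  qed
  have c0: "0 \<le> c" unfolding c_def by simp
  have pE1: "prob E1 = prob {\<omega> \<in> space M. 3 \<le> N \<omega>} * prob {\<omega> \<in> space M. 0 \<le> G \<omega>}"
  proof -
    have "prob ((\<lambda>x. (N x, G x)) -` ({3..} \<times> {0..}) \<inter> space M) = prob (N -` {3..} \<inter> space M) * prob (G -` {0..} \<inter> space M)"
      by (rule indep_varD[OF ind]) auto
    moreover have "(\<lambda>x. (N x, G x)) -` ({3..} \<times> {0..}) \<inter> space M = E1" unfolding E1_def by auto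
    moreover have "N -` {3..} \<inter> space M = {\<omega> \<in> space M. 3 \<le> N \<omega>}" by auto
    moreover have "G -` {0..} \<inter> space M = {\<omega> \<in> space M. 0 \<le> G \<omega>}" by auto
    ultimately show ?thesis by simp
  qed
  have pE2: "prob E2 = prob {\<omega> \<in> space M. N \<omega> \<le> -3} * prob {\<omega> \<in> space M. G \<omega> \<le> 0}"
  proof -
    have "prob ((\<lambda>x. (N x, G x)) -` ({..-3} \<times> {..0}) \<inter> space M) = prob (N -` {..-3} \<inter> space M) * prob (G -` {..0} \<inter> space M)"
      by (rule indep_varD[OF ind]) auto
    moreover have "(\<lambda>x. (N x, G x)) -` ({..-3} \<times> {..0}) \<inter> space M = E2" unfolding E2_def by auto
    moreover have "N -` {..-3} \<inter> space M = {\<omega> \<in> space M. N \<omega> \<le> -3}" by auto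
    moreover have "G -` {..0} \<inter> space M = {\<omega> \<in> space M. G \<omega> \<le> 0}" by auto
    ultimately show ?thesis by simp
  qed
  have g1: "{\<omega> \<in> space M. 0 \<le> G \<omega>} \<in> events" by measurable
  have g2: "{\<omega> \<in> space M. G \<omega> \<le> 0} \<in> events" by measurable
  have G1: "1 \<le> prob {\<omega> \<in> space M. 0 \<le> G \<omega>} + prob {\<omega> \<in> space M. G \<omega> \<le> 0}"
  proof -
    have "prob ({\<omega> \<in> space M. 0 \<le> G \<omega>} \<union> {\<omega> \<in> space M. G \<omega> \<le> 0}) \<le> prob {\<omega> \<in> space M. 0 \<le> G \<omega>} + prob {\<omega> \<in> space M. G \<omega> \<le> 0}"
      by (rule measure_subadditive[OF g1 g2]) (simp_all add: emeasure_eq_measure)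
    moreover have "{\<omega> \<in> space M. 0 \<le> G \<omega>} \<union> {\<omega> \<in> space M. G \<omega> \<le> 0} = space M" by auto
    ultimately show ?thesis using prob_space by simp
  qed
  have "prob (E1 \<union> E2) = prob E1 + prob E2"
    by (rule finite_measure_Union[OF E1m E2m]) (auto simp: E1_def E2_def)
  also have "\<dots> \<ge> c * prob {\<omega> \<in> space M. 0 \<le> G \<omega>} + c * prob {\<omega> \<in> space M. G \<omega> \<le> 0}"
    unfolding pE1 pE2 by (intro add_mono mult_right_mono pN1 pN2) auto
  finally have "c * (prob {\<omega> \<in> space M. 0 \<le> G \<omega>} + prob {\<omega> \<in> space M. G \<omega> \<le> 0}) \<le> prob (E1 \<union> E2)"
    by (simp add: distrib_left)
  moreover have "c \<le> c * (prob {\<omega> \<in> space M. 0 \<le> G \<omega>} + prob {\<omega> \<in> space M. G \<omega> \<le> 0})"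
    using mult_left_mono[OF G1 c0] by simp
  ultimately have cE: "c \<le> prob (E1 \<union> E2)" by linarith
  have sub: "E1 \<union> E2 \<subseteq> S"
  proof
    fix \<omega> assume w: "\<omega> \<in> E1 \<union> E2"
    then have wM: "\<omega> \<in> space M" unfolding E1_def E2_def by auto
    define H :: real where "H = real (2^q)"
    have H1: "1 \<le> H" unfolding H_def by simp
    have sH: "0 < sqrt H" using H1 by simp
    define T where "T = Tq q \<omega>"
    have TN: "T = sqrt H * N \<omega>" unfolding T_def N_def H_def using sH[unfolded H_def] by simp
    have cs: "(3 \<le> N \<omega> \<and> 0 \<le> G \<omega>) \<or> (N \<omega> \<le> -3 \<and> G \<omega> \<le> 0)"
      using w unfolding E1_def E2_def by auto
    have ab3: "3 \<le> \<bar>N \<omega>\<bar>" using cs by auto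
    have "3\<^sup>2 \<le> \<bar>N \<omega>\<bar>\<^sup>2" by (rule power_mono[OF ab3]) simp
    then have N9: "9 \<le> (N \<omega>)\<^sup>2" by simp
    have NG: "0 \<le> N \<omega> * G \<omega>"
      using cs by (auto intro: mult_nonneg_nonneg mult_nonpos_nonpos)
    have T2: "9 * H \<le> T\<^sup>2" unfolding TN using N9 H1 by (simp add: power_mult_distrib)
    have TG: "0 \<le> T * G \<omega>" unfolding TN using NG sH by (simp add: mult.assoc)
    have "H * (9 * H) \<le> H * T\<^sup>2" using T2 H1 by (intro mult_left_mono) auto
    moreover have "H * T\<^sup>2 + 2 * T * G \<omega> \<le> Vstat a X (4 * 2^q - 1) \<omega>"
      using V_lower[of q \<omega>] unfolding T_def H_def G_def by simp
    ultimately have V9: "9 * H\<^sup>2 \<le> Vstat a X (4 * 2^q - 1) \<omega>" using TG by (simp add: power2_eq_square)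
    have v: "real (vnorm a (4 * 2^q - 1)) = (16 * H\<^sup>2 + 12 * H - 4) / 6"
      unfolding H_def using vnorm_4H[of q] by simp
    have HH: "1 * H \<le> H * H" by (rule mult_right_mono[OF H1]) (use H1 in simp)
    have "0 < 16 * H\<^sup>2 + 12 * H - 4" using H1 HH unfolding power2_eq_square by linarith
    then have vpos: "0 < (16 * H\<^sup>2 + 12 * H - 4) / 6" by simp
    have "2 * ((16 * H\<^sup>2 + 12 * H - 4) / 6) < 9 * H\<^sup>2"
    proof -
      have "0 \<le> (3 * H - 2)\<^sup>2" by simp
      moreover have "0 < H\<^sup>2" using H1 by simp
      ultimately show ?thesis by (simp add: power2_eq_square algebra_simps)
    qed
    then have "2 * ((16 * H\<^sup>2 + 12 * H - 4) / 6) < Vstat a X (4 * 2^q - 1) \<omega>" using V9 by linarith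
    then have "2 < Vstat a X (4 * 2^q - 1) \<omega> / ((16 * H\<^sup>2 + 12 * H - 4) / 6)"
      using vpos by (simp add: pos_less_divide_eq mult.commute)
    then show "\<omega> \<in> S" unfolding S_def v using wM by simp
  qed
  have "prob (E1 \<union> E2) \<le> prob S" by (rule finite_measure_mono[OF sub Sm])
  with cE show ?thesis unfolding c_def[symmetric] S_def by simp
qed

lemma part3:
  "\<not> (\<forall>\<epsilon>>0. (\<lambda>n. measure M {\<omega> \<in> space M. \<bar>Vstat a X n \<omega> / real (vnorm a n) - 1\<bar> > \<epsilon>}) \<longlonglongrightarrow> 0)"
proof
  assume H: "\<forall>\<epsilon>>0. (\<lambda>n. measure M {\<omega> \<in> space M. \<bar>Vstat a X n \<omega> / real (vnorm a n) - 1\<bar> > \<epsilon>}) \<longlonglongrightarrow> 0"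
  define f where "f n = measure M {\<omega> \<in> space M. \<bar>Vstat a X n \<omega> / real (vnorm a n) - 1\<bar> > 1}" for n
  define c where "c = min (measure std_normal_measure {3..4}) (measure std_normal_measure {-4..-3})"
  have cpos: "0 < c" unfolding c_def by (simp add: std_normal_pos)
  have f0: "f \<longlonglongrightarrow> 0" using H unfolding f_def[abs_def] by simp
  have lim: "filterlim (\<lambda>q::nat. 4 * 2^q - 1 :: nat) at_top sequentially"
  proof (rule filterlim_at_top_mono[OF filterlim_ident])
    show "\<forall>\<^sub>F q in sequentially. q \<le> 4 * 2 ^ q - 1"
    proof (intro always_eventually allI)
      fix q :: nat
      have "q < 2^q" by (rule less_exp)
      then show "q \<le> 4 * 2 ^ q - 1" by linarith
    qed
  qed
  have "(\<lambda>q. f (4 * 2^q - 1)) \<longlonglongrightarrow> 0" using filterlim_compose[OF f0 lim] by (simp add: o_def)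
  moreover have "\<exists>N. \<forall>q\<ge>N. c \<le> f (4 * 2^q - 1)"
    using key_bound unfolding f_def c_def by blast
  ultimately have "c \<le> 0" by (rule LIMSEQ_le_const)
  with cpos show False by simp
qed

end

theorem mainTheorem11:
  fixes M :: "'a measure" and X :: "nat \<Rightarrow> 'a \<Rightarrow> real"
    and P :: "'c measure" and \<xi> :: "nat \<Rightarrow> 'c \<Rightarrow> real"
    and Q :: "'b measure" and B :: "real \<Rightarrow> 'b \<Rightarrow> real"
    and a :: "nat \<Rightarrow> nat"
  assumes M: "prob_space M"
    and X_indep: "prob_space.indep_vars M (\<lambda>_. borel) X {1..}"
    and X_normal: "\<And>i. 1 \<le> i \<Longrightarrow> distributed M lborel (X i) std_normal_density"
    and a_def: "\<And>k. a k = 2 ^ (k - 1)"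
    and BM: "brownian_motion Q B"
    and P: "prob_space P"
    and xi_indep: "prob_space.indep_vars P (\<lambda>_. borel) \<xi> UNIV"
    and xi_law: "\<And>j. distr P borel (\<xi> j) = distr Q borel (\<lambda>\<omega>. LBINT t=0..1. (B t \<omega>)\<^sup>2)"
  shows "(\<lambda>m. real (vnorm a (2 ^ m)) / (2 ^ (2 * m) / 6)) \<longlonglongrightarrow> 1
    \<and> weak_conv_m (\<lambda>m. distr M borel (\<lambda>\<omega>. Vstat a X (2 ^ m) \<omega> / real (vnorm a (2 ^ m))))
        (distr P borel (\<lambda>\<omega>. 3 / 2 * (\<Sum>j. \<xi> j \<omega> / 4 ^ j)))
    \<and> \<not> (\<forall>\<epsilon>>0. (\<lambda>n. measure M {\<omega> \<in> space M. \<bar>Vstat a X n \<omega> / real (vnorm a n) - 1\<bar> > \<epsilon>})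
              \<longlonglongrightarrow> 0)"
proof -
  have XS: "xs M X a" by (rule xs.intro[OF M X_indep X_normal a_def])
  have BMQ: "bm Q B" by (rule bm.intro[OF BM])
  show ?thesis using part1[OF a_def] part2[OF XS BMQ P xi_indep xi_law] xs.part3[OF XS] by blast
qed

end
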